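(* In the general setting of the context, assume $\mathbf j(\phi,\mathbf 0)=\mathbf 0$ for all $\phi$ and $\frac{\partial\mathbf j}{\partial\boldsymbol\mu}(\phi,\mathbf 0)$ is symmetric positive definite for all $\phi$. Let $\mathcal C_r=\{(\mathbf c,v,\phi)\in\mathbb R^{N+2}:|\mathbf c-\mathbf c^{\rm e}|<r,\ |\phi|<r\}$. There are constants $K_\alpha>0$ and $K>0$ such that for every $|\alpha|<K_\alpha$: (1) $\mathcal C_K\cap\Gamma_\alpha$ is an $N$-dimensional submanifold of $\mathbb R^{N+2}$, and every $\mathbf y\in\mathcal C_K\cap\Gamma_\alpha$ can be written $\mathbf y=(\mathbf c,v,\Phi(\mathbf c,\alpha))$, where $\Phi$ is a $C^1$ function of $(\mathbf c,\alpha)$; (2) for every $\mathbf y^0=(\mathbf c^0,v^0,\phi^0)\in\mathcal C_K\cap\Gamma_\alpha$ the general pump-leak system has a unique solution with initial value $\mathbf y^0$ for short times, and for short times $\phi(t)=\Phi(\mathbf c(t),\alpha)$.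
   Context: Fix $N\ge2$, real valences $z_1,\dots,z_N$ not all zero, $\mathbf z=(z_k)$, positive constants $c_k^{\rm e}$ with $\sum_kz_kc_k^{\rm e}=0$, $\mathbf c^{\rm e}=(c_k^{\rm e})$, $A>0$, $z\in\mathbb R$, and a parameter $\alpha\in\mathbb R$. For $\mathbf c\in(0,\infty)^N$, $v>0$, $\phi\in\mathbb R$ set $\mu_k=\ln(c_k/c_k^{\rm e})+z_k\phi$, $\boldsymbol\mu=(\mu_k)$, $\pi_{\rm w}=\sum_kc_k^{\rm e}-(\sum_kc_k+A/v)$. Let $\mathbf j:\mathbb R\times\mathbb R^N\to\mathbb R^N$, $(\phi,\boldsymbol\mu)\mapsto\mathbf j(\phi,\boldsymbol\mu)$, $\mathbf p:\mathbb R\times(0,\infty)^N\to\mathbb R^N$, $(\phi,\mathbf c)\mapsto\mathbf p(\phi,\mathbf c)$, $j_{\rm w}:\mathbb R\to\mathbb R$ be $C^1$; $\partial\mathbf j/\partial\boldsymbol\mu$ denotes the Jacobian in $\boldsymbol\mu$ at fixed $\phi$. The general pump-leak system is $\frac{d}{dt}(v\mathbf c)=-\mathbf j(\phi,\boldsymbol\mu)-\alpha\mathbf p(\phi,\mathbf c)$, $0=\sum_kz_kc_k+zA/v$, $\frac{dv}{dt}=-j_{\rm w}(\pi_{\rm w})$. Let $Q(\mathbf c,v)=\sum_kz_kc_k+zA/v$, $I_\alpha(\mathbf c,\phi)=\langle\mathbf z,\mathbf j+\alpha\mathbf p\rangle_{\mathbb R^N}$, $\Gamma_\alpha=\{(\mathbf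 c,v,\phi)\in(0,\infty)^N\times(0,\infty)\times\mathbb R:Q=0,\ I_\alpha=0\}$. A solution with initial value $\mathbf y^0\in\Gamma_\alpha$ is $(\mathbf c(t),v(t),\phi(t))$, $t\in[0,T)$, with $\mathbf c,v$ of class $C^1$, $\phi$ continuous, satisfying the system and the initial condition. *)

theory Defs
  imports "HOL-Analysis.Analysis"
begin

definition C1_on :: "'a::real_normed_vector set \<Rightarrow> ('a \<Rightarrow> 'b::real_normed_vector) \<Rightarrow> bool" where
  "C1_on S f \<longleftrightarrow> (\<exists>f'. (\<forall>x\<in>S. (f has_derivative blinfun_apply (f' x)) (at x)) \<and> continuous_on S f')"

definition submanifold_dim :: "'k::euclidean_space itself \<Rightarrow> 'a::euclidean_space set \<Rightarrow> bool" where
  "submanifold_dim (_::'k itself) M \<longleftrightarrow>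
     (\<forall>x\<in>M. \<exists>U (W::'k set) \<psi> g. open U \<and> x \<in> U \<and> open W \<and> C1_on W \<psi> \<and>
        (\<forall>w\<in>W. inj (frechet_derivative \<psi> (at w))) \<and> homeomorphism W (M \<inter> U) \<psi> g)"

definition pos_vec :: "real^'n \<Rightarrow> bool" where
  "pos_vec c \<longleftrightarrow> (\<forall>k. 0 < c $ k)"

definition mu :: "real^'n \<Rightarrow> real^'n \<Rightarrow> real^'n \<Rightarrow> real \<Rightarrow> real^'n" where
  "mu z ce c \<phi> = (\<chi> k. ln (c $ k / ce $ k) + z $ k * \<phi>)"

definition pi_w :: "real^'n \<Rightarrow> real \<Rightarrow> real^'n \<Rightarrow> real \<Rightarrow> real" where
  "pi_w ce A c v = (\<Sum>k\<in>UNIV. ce $ k) - ((\<Sum>k\<in>UNIV. c $ k) + A / v)"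

definition Qf :: "real^'n \<Rightarrow> real \<Rightarrow> real \<Rightarrow> real^'n \<Rightarrow> real \<Rightarrow> real" where
  "Qf z zA A c v = (\<Sum>k\<in>UNIV. z $ k * c $ k) + zA * A / v"

definition I_alpha :: "real^'n \<Rightarrow> real^'n \<Rightarrow> (real \<Rightarrow> real^'n \<Rightarrow> real^'n) \<Rightarrow> (real \<Rightarrow> real^'n \<Rightarrow> real^'n)
     \<Rightarrow> real \<Rightarrow> real^'n \<Rightarrow> real \<Rightarrow> real" where
  "I_alpha z ce j p \<alpha> c \<phi> = z \<bullet> (j \<phi> (mu z ce c \<phi>) + \<alpha> *\<^sub>R p \<phi> c)"

definition Gamma :: "real^'n \<Rightarrow> real^'n \<Rightarrow> real \<Rightarrow> real \<Rightarrow> (real \<Rightarrow> real^'n \<Rightarrow> real^'n)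
     \<Rightarrow> (real \<Rightarrow> real^'n \<Rightarrow> real^'n) \<Rightarrow> real \<Rightarrow> ((real^'n) \<times> real \<times> real) set" where
  "Gamma z ce A zA j p \<alpha> = {(c, v, \<phi>). pos_vec c \<and> 0 < v \<and> Qf z zA A c v = 0 \<and> I_alpha z ce j p \<alpha> c \<phi> = 0}"

definition Cyl :: "real^'n \<Rightarrow> real \<Rightarrow> ((real^'n) \<times> real \<times> real) set" where
  "Cyl ce r = {(c, v, \<phi>). norm (c - ce) < r \<and> \<bar>\<phi>\<bar> < r}"

definition pl_solution :: "real^'n \<Rightarrow> real^'n \<Rightarrow> real \<Rightarrow> real \<Rightarrow> (real \<Rightarrow> real^'n \<Rightarrow> real^'n)
     \<Rightarrow> (real \<Rightarrow> real^'n \<Rightarrow> real^'n) \<Rightarrow> (real \<Rightarrow> real) \<Rightarrow> real \<Rightarrow> (real^'n) \<times> real \<times> real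
     \<Rightarrow> real \<Rightarrow> (real \<Rightarrow> real^'n) \<Rightarrow> (real \<Rightarrow> real) \<Rightarrow> (real \<Rightarrow> real) \<Rightarrow> bool" where
  "pl_solution z ce A zA j p jw \<alpha> y0 T c v \<phi> \<longleftrightarrow>
     0 < T \<and>
     (\<exists>c'. continuous_on {0..<T} c' \<and> (\<forall>t\<in>{0..<T}. (c has_vector_derivative c' t) (at t within {0..<T}))) \<and>
     (\<exists>v'. continuous_on {0..<T} v' \<and> (\<forall>t\<in>{0..<T}. (v has_vector_derivative v' t) (at t within {0..<T}))) \<and>
     continuous_on {0..<T} \<phi> \<and>
     (\<forall>t\<in>{0..<T}. pos_vec (c t) \<and> 0 < v t \<and>
        ((\<lambda>s. v s *\<^sub>R c s) has_vector_derivative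
            (- j (\<phi> t) (mu z ce (c t) (\<phi> t)) - \<alpha> *\<^sub>R p (\<phi> t) (c t))) (at t within {0..<T}) \<and>
        Qf z zA A (c t) (v t) = 0 \<and>
        (v has_vector_derivative (- jw (pi_w ce A (c t) (v t)))) (at t within {0..<T})) \<and>
     (c 0, v 0, \<phi> 0) = y0"

end

theory Submission
  imports Defs
begin

definition C1d :: "'a::real_normed_vector set \<Rightarrow> ('a \<Rightarrow> 'b::real_normed_vector) \<Rightarrow> ('a \<Rightarrow> 'a \<Rightarrow> 'b) \<Rightarrow> bool" where
  "C1d S f D \<longleftrightarrow> (\<forall>x\<in>S. (f has_derivative D x) (at x)) \<and> (\<forall>v. continuous_on S (\<lambda>x. D x v))"

lemma C1d_der: "C1d S f D \<Longrightarrow> x \<in> S \<Longrightarrow> (f has_derivative D x) (at x)"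
  by (simp add: C1d_def)

lemma C1d_cont: "C1d S f D \<Longrightarrow> continuous_on S (\<lambda>x. D x v)"
  by (simp add: C1d_def)

lemma C1d_bl: "C1d S f D \<Longrightarrow> x \<in> S \<Longrightarrow> bounded_linear (D x)"
  using C1d_der has_derivative_bounded_linear by blast

lemma C1d_fcont: "C1d S f D \<Longrightarrow> continuous_on S f"
  by (meson C1d_der continuous_at_imp_continuous_on has_derivative_continuous)

lemma C1d_subset: "C1d S f D \<Longrightarrow> T \<subseteq> S \<Longrightarrow> C1d T f D"
  unfolding C1d_def by (meson continuous_on_subset subsetD)

lemma C1d_const: "C1d S (\<lambda>x. c) (\<lambda>x v. 0)"
  unfolding C1d_def by (auto intro: has_derivative_const)

lemma C1d_linear: "bounded_linear l \<Longrightarrow> C1d S l (\<lambda>x. l)"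
  unfolding C1d_def by (auto intro: bounded_linear_imp_has_derivative)

lemma C1d_id: "C1d S (\<lambda>x. x) (\<lambda>x v. v)"
  unfolding C1d_def by (auto intro: has_derivative_ident)

lemma C1d_fst: "C1d S fst (\<lambda>x v. fst v)"
  unfolding C1d_def by (auto intro: has_derivative_fst[OF has_derivative_ident])

lemma C1d_snd: "C1d S snd (\<lambda>x v. snd v)"
  unfolding C1d_def by (auto intro: has_derivative_snd[OF has_derivative_ident])

lemma C1d_add: "C1d S f Df \<Longrightarrow> C1d S g Dg \<Longrightarrow> C1d S (\<lambda>x. f x + g x) (\<lambda>x v. Df x v + Dg x v)"
  unfolding C1d_def by (auto intro!: has_derivative_add continuous_intros)

lemma C1d_diff: "C1d S f Df \<Longrightarrow> C1d S g Dg \<Longrightarrow> C1d S (\<lambda>x. f x - g x) (\<lambda>x v. Df x v - Dg x v)"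
  unfolding C1d_def by (auto intro!: has_derivative_diff continuous_intros)

lemma C1d_minus: "C1d S f Df \<Longrightarrow> C1d S (\<lambda>x. - f x) (\<lambda>x v. - Df x v)"
  unfolding C1d_def by (auto intro!: has_derivative_minus continuous_intros)

lemma C1d_scaleR:
  fixes f :: "'a::real_normed_vector \<Rightarrow> real"
  shows "C1d S f Df \<Longrightarrow> C1d S g Dg \<Longrightarrow> C1d S (\<lambda>x. f x *\<^sub>R g x) (\<lambda>x v. f x *\<^sub>R Dg x v + Df x v *\<^sub>R g x)"
  apply (frule C1d_fcont, frule C1d_fcont[of _ g])
  unfolding C1d_def by (auto intro!: has_derivative_scaleR continuous_intros)

lemma C1d_mult:
  fixes f :: "'a::real_normed_vector \<Rightarrow> real"
  shows "C1d S f Df \<Longrightarrow> C1d S g Dg \<Longrightarrow> C1d S (\<lambda>x. f x * g x) (\<lambda>x v. f x * Dg x v + Df x v * g x)"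
  using C1d_scaleR[of S f Df g Dg] by simp

lemma C1d_Pair: "C1d S f Df \<Longrightarrow> C1d S g Dg \<Longrightarrow> C1d S (\<lambda>x. (f x, g x)) (\<lambda>x v. (Df x v, Dg x v))"
  unfolding C1d_def by (auto intro!: has_derivative_Pair continuous_intros)

lemma C1d_sum: "finite I \<Longrightarrow> (\<And>i. i \<in> I \<Longrightarrow> C1d S (f i) (Df i)) \<Longrightarrow>
   C1d S (\<lambda>x. \<Sum>i\<in>I. f i x) (\<lambda>x v. \<Sum>i\<in>I. Df i x v)"
  unfolding C1d_def by (auto intro!: has_derivative_sum continuous_on_sum)

lemma C1d_compose:
  fixes f :: "'a::real_normed_vector \<Rightarrow> 'b::euclidean_space"
  assumes f: "C1d S f Df" and g: "C1d T g Dg" and ST: "\<And>x. x \<in> S \<Longrightarrow> f x \<in> T"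
  shows "C1d S (\<lambda>x. g (f x)) (\<lambda>x v. Dg (f x) (Df x v))"
  unfolding C1d_def
proof safe
  fix x assume x: "x \<in> S"
  show "((\<lambda>x. g (f x)) has_derivative (\<lambda>v. Dg (f x) (Df x v))) (at x)"
    using diff_chain_at[OF C1d_der[OF f x] C1d_der[OF g ST[OF x]]] by (simp add: o_def)
next
  fix v
  have eq: "Dg (f x) (Df x v) = (\<Sum>i\<in>Basis. (Df x v \<bullet> i) *\<^sub>R Dg (f x) i)" if "x \<in> S" for x
  proof -
    have bl: "bounded_linear (Dg (f x))" using C1d_bl[OF g ST[OF that]] .
    have "Dg (f x) (Df x v) = Dg (f x) (\<Sum>i\<in>Basis. (Df x v \<bullet> i) *\<^sub>R i)"
      by (simp add: euclidean_representation)
    also have "\<dots> = (\<Sum>i\<in>Basis. (Df x v \<bullet> i) *\<^sub>R Dg (f x) i)"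
      using bl by (simp add: linear_sum linear_scale bounded_linear.linear)
    finally show ?thesis .
  qed
  have fc: "continuous_on S f" using C1d_fcont[OF f] .
  have "continuous_on S (\<lambda>x. \<Sum>i\<in>Basis. (Df x v \<bullet> i) *\<^sub>R Dg (f x) i)"
  proof (intro continuous_on_sum continuous_intros)
    fix i :: 'b
    show "continuous_on S (\<lambda>x. Df x v)" using C1d_cont[OF f] .
    show "continuous_on S (\<lambda>x. Dg (f x) i)"
      using continuous_on_compose2[OF C1d_cont[OF g, of i] fc] ST by blast
  qed
  then show "continuous_on S (\<lambda>x. Dg (f x) (Df x v))"
    by (rule continuous_on_eq) (simp add: eq)
qed

lemma C1d_ln: "C1d {x::real. 0 < x} ln (\<lambda>x v. inverse x * v)"
  unfolding C1d_def
proof safe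
  fix x :: real assume "0 < x"
  then show "(ln has_derivative (\<lambda>v. inverse x * v)) (at x)"
    using has_field_derivative_imp_has_derivative[OF DERIV_ln] by simp
next
  fix v show "continuous_on {x::real. 0 < x} (\<lambda>x. inverse x * v)"
    by (intro continuous_intros) auto
qed

lemma C1d_inverse: "C1d {x::real. x \<noteq> 0} inverse (\<lambda>x. (*) (- (inverse x ^ Suc (Suc 0))))"
  unfolding C1d_def
proof safe
  fix x :: real assume "x \<noteq> 0"
  then show "(inverse has_derivative (*) (- (inverse x ^ Suc (Suc 0)))) (at x)"
    using has_field_derivative_imp_has_derivative[OF DERIV_inverse[of x UNIV]] by simp
next
  fix v show "continuous_on {x::real. x \<noteq> 0} (\<lambda>x. (- (inverse x ^ Suc (Suc 0))) * v)"
    by (intro continuous_intros) auto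
qed

lemma C1_on_C1d:
  assumes "C1_on S f"
  shows "\<exists>D. C1d S f D"
proof -
  obtain f' where d: "\<forall>x\<in>S. (f has_derivative blinfun_apply (f' x)) (at x)" and c: "continuous_on S f'"
    using assms unfolding C1_on_def by blast
  have "C1d S f (\<lambda>x. blinfun_apply (f' x))"
    unfolding C1d_def using d c by (auto intro!: continuous_intros)
  then show ?thesis by blast
qed

lemma C1d_blinfun:
  fixes f :: "'a::euclidean_space \<Rightarrow> 'b::real_normed_vector"
  assumes "C1d S f D"
  shows "\<And>x. x \<in> S \<Longrightarrow> blinfun_apply (Blinfun (D x)) = D x"
    and "continuous_on S (\<lambda>x. Blinfun (D x))"
proof -
  show ap: "blinfun_apply (Blinfun (D x)) = D x" if "x \<in> S" for x
    using C1d_bl[OF assms that] by (simp add: bounded_linear_Blinfun_apply)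
  show "continuous_on S (\<lambda>x. Blinfun (D x))"
  proof (rule continuous_on_blinfun_componentwise)
    fix i :: 'a
    show "continuous_on S (\<lambda>x. blinfun_apply (Blinfun (D x)) i)"
      by (rule continuous_on_eq[OF C1d_cont[OF assms, of i]]) (simp add: ap)
  qed
qed

lemma C1d_C1_on:
  fixes f :: "'a::euclidean_space \<Rightarrow> 'b::real_normed_vector"
  assumes "C1d S f D"
  shows "C1_on S f"
  unfolding C1_on_def
  using C1d_blinfun[OF assms] C1d_der[OF assms] by metis

lemma bl_split:
  fixes L :: "'a::real_normed_vector \<times> real \<Rightarrow> real"
  assumes "bounded_linear L"
  shows "L (h, k) = L (h, 0) + k * L (0, 1)"
proof -
  interpret bounded_linear L by fact
  have "(h, k) = (h, 0) + k *\<^sub>R (0, 1)" by simp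
  then have "L (h, k) = L ((h, 0) + k *\<^sub>R (0, 1))" by metis
  also have "\<dots> = L (h, 0) + k * L (0, 1)" using add[of "(h, 0)" "k *\<^sub>R (0, 1)"] scale[of k "(0, 1)"] by simp
  finally show ?thesis .
qed

lemma IFT:
  fixes F :: "'a::euclidean_space \<times> real \<Rightarrow> real"
  assumes S: "open S" and F: "C1d S F DF" and w0: "(a, b) \<in> S" and F0: "F (a, b) = 0"
    and nz: "DF (a, b) (0, 1) \<noteq> 0"
  obtains U \<delta> \<Phi> D\<Phi> where "open U" "a \<in> U" "\<delta> > 0" "C1d U \<Phi> D\<Phi>" "\<Phi> a = b"
    "\<forall>x\<in>U. \<bar>\<Phi> x - b\<bar> < \<delta> \<and> F (x, \<Phi> x) = 0"
    "\<forall>x\<in>U. \<forall>y. \<bar>y - b\<bar> < \<delta> \<longrightarrow> (x, y) \<in> S"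
    "\<forall>x\<in>U. \<forall>y. \<bar>y - b\<bar> < \<delta> \<and> F (x, y) = 0 \<longrightarrow> y = \<Phi> x"
proof -
  define G where "G = (\<lambda>w::'a \<times> real. (fst w, F w))"
  define DG where "DG = (\<lambda>w (h::'a \<times> real). (fst h, DF w h))"
  have CG: "C1d S G DG"
    unfolding G_def DG_def by (rule C1d_Pair[OF C1d_fst F])
  note bG = C1d_blinfun[OF CG]
  define L0 where "L0 = DF (a, b)"
  define \<alpha>0 where "\<alpha>0 = L0 (0, 1)"
  have blL0: "bounded_linear L0" unfolding L0_def using C1d_bl[OF F w0] .
  have a0: "\<alpha>0 \<noteq> 0" using nz unfolding \<alpha>0_def L0_def .
  define iv where "iv = (\<lambda>p::'a \<times> real. (fst p, (snd p - L0 (fst p, 0)) / \<alpha>0))"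
  have bliv: "bounded_linear iv"
  proof -
    have b1: "bounded_linear (\<lambda>x::'a \<times> real. (fst x, 0::real))"
      by (rule bounded_linear_Pair[OF bounded_linear_fst bounded_linear_zero])
    have b2: "bounded_linear (\<lambda>x::'a \<times> real. L0 (fst x, 0))"
      using bounded_linear_compose[OF blL0 b1] .
    have b3: "bounded_linear (\<lambda>x::'a \<times> real. (snd x - L0 (fst x, 0)) / \<alpha>0)"
      using bounded_linear_compose[OF bounded_linear_divide[of "\<alpha>0"] bounded_linear_sub[OF bounded_linear_snd b2]] by simp
    show ?thesis unfolding iv_def by (rule bounded_linear_Pair[OF bounded_linear_fst b3])
  qed
  have invf: "Blinfun iv o\<^sub>L Blinfun (DG (a, b)) = id_blinfun"
  proof (rule blinfun_eqI)
    fix h :: "'a \<times> real"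
    have "L0 h = L0 (fst h, 0) + snd h * \<alpha>0"
      using bl_split[OF blL0, of "fst h" "snd h"] unfolding \<alpha>0_def by simp
    then show "blinfun_apply (Blinfun iv o\<^sub>L Blinfun (DG (a, b))) h = blinfun_apply id_blinfun h"
      using bG(1)[OF w0] bliv a0
      by (simp add: bounded_linear_Blinfun_apply iv_def DG_def L0_def[symmetric] prod_eq_iff)
  qed
  obtain U' V g g' where U': "open U'" "U' \<subseteq> S" "(a, b) \<in> U'" and V: "open V" "G (a, b) \<in> V"
    and hom: "homeomorphism U' V G g"
    and dg: "\<And>y. y \<in> V \<Longrightarrow> (g has_derivative (g' y)) (at y)"
    and bij: "\<And>y. y \<in> V \<Longrightarrow> bij (blinfun_apply (Blinfun (DG (g y))))"
    using inverse_function_theorem[OF S, of G "\<lambda>w. Blinfun (DG w)", OF _ bG(2) w0 invf]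
      C1d_der[OF CG] bG(1) by metis
  have GV: "G (g y) = y" if "y \<in> V" for y using homeomorphism_apply2[OF hom that] .
  have gU: "g y \<in> U'" if "y \<in> V" for y using hom that unfolding homeomorphism_def by blast
  have gc: "continuous_on V g" using hom unfolding homeomorphism_def by blast
  define \<Phi> where "\<Phi> = (\<lambda>x. snd (g (x, 0)))"
  have gx: "g (x, 0) = (x, \<Phi> x)" if "(x, 0) \<in> V" for x
    using GV[OF that] unfolding G_def \<Phi>_def by (metis fst_conv prod.collapse)
  have Fx: "F (x, \<Phi> x) = 0" if "(x, 0) \<in> V" for x
    using GV[OF that] gx[OF that] unfolding G_def by (metis prod.inject)
  obtain r where r: "r > 0" "ball (a, b) r \<subseteq> U'" using U' openE by blast
  define \<delta> where "\<delta> = r / 2"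
  have inU': "(x, y) \<in> U'" if "norm (x - a) < \<delta>" "\<bar>y - b\<bar> < \<delta>" for x y
  proof -
    have "norm ((a, b) - (x, y)) \<le> norm (a - x) + norm (b - y)"
      using norm_Pair_le[of "a - x" "b - y"] by simp
    also have "\<dots> < r" using that unfolding \<delta>_def by (simp add: norm_minus_commute abs_minus_commute)
    finally show ?thesis using r(2) by (auto simp: dist_norm)
  qed
  define V' where "V' = {x. (x, 0) \<in> V}"
  have oV': "open V'" unfolding V'_def
  proof -
    have "open ((\<lambda>x::'a. (x, 0::real)) -` V)" by (intro open_vimage V(1) continuous_intros)
    then show "open {x. (x, 0) \<in> V}" by (simp add: vimage_def)
  qed
  have cPhi: "continuous_on V' \<Phi>"
    unfolding \<Phi>_def V'_def
    by (intro continuous_intros continuous_on_compose2[OF gc]) auto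
  define U where "U = V' \<inter> \<Phi> -` ball b \<delta> \<inter> ball a \<delta>"
  have oU: "open U"
  proof -
    have "open (V' \<inter> \<Phi> -` ball b \<delta>)"
      using iffD1[OF continuous_on_open_vimage[OF oV', of \<Phi>] cPhi, rule_format, OF open_ball[of b \<delta>]]
      by (simp add: Int_commute)
    then show ?thesis unfolding U_def using open_Int open_ball by blast
  qed
  have a0V: "(a, 0) \<in> V" using V(2) F0 unfolding G_def by simp
  have Phia: "\<Phi> a = b"
    using homeomorphism_apply1[OF hom U'(3)] F0 unfolding \<Phi>_def G_def by simp
  have aU: "a \<in> U" unfolding U_def V'_def using a0V Phia r by (simp add: \<delta>_def)
  have dpos: "\<delta> > 0" using r unfolding \<delta>_def by simp
  have P1: "\<forall>x\<in>U. \<bar>\<Phi> x - b\<bar> < \<delta> \<and> F (x, \<Phi> x) = 0"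
    using Fx unfolding U_def V'_def by (auto simp: dist_norm abs_minus_commute)
  have P2: "\<forall>x\<in>U. \<forall>y. \<bar>y - b\<bar> < \<delta> \<longrightarrow> (x, y) \<in> S"
    using inU' U'(2) unfolding U_def by (auto simp: dist_norm norm_minus_commute)
  have P3: "\<forall>x\<in>U. \<forall>y. \<bar>y - b\<bar> < \<delta> \<and> F (x, y) = 0 \<longrightarrow> y = \<Phi> x"
  proof (intro ballI allI impI)
    fix x y assume x: "x \<in> U" and y: "\<bar>y - b\<bar> < \<delta> \<and> F (x, y) = 0"
    have "(x, y) \<in> U'" using inU' x y unfolding U_def by (auto simp: dist_norm norm_minus_commute)
    moreover have "G (x, y) = (x, 0)" using y unfolding G_def by simp
    ultimately have "g (x, 0) = (x, y)" using homeomorphism_apply1[OF hom] by metis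
    then show "y = \<Phi> x" unfolding \<Phi>_def by simp
  qed
  define D\<Phi> where "D\<Phi> = (\<lambda>x h. - DF (x, \<Phi> x) (h, 0) / DF (x, \<Phi> x) (0, 1))"
  have UV: "(x, 0) \<in> V" if "x \<in> U" for x using that unfolding U_def V'_def by simp
  have US: "(x, \<Phi> x) \<in> S" if "x \<in> U" for x using P1 P2 that by auto
  have nzx: "DF (x, \<Phi> x) (0, 1) \<noteq> 0" if "x \<in> U" for x
  proof
    assume z: "DF (x, \<Phi> x) (0, 1) = 0"
    have "inj (DG (x, \<Phi> x))" using bij[OF UV[OF that]] bG(1)[OF US[OF that]] gx[OF UV[OF that]]
      by (simp add: bij_def)
    moreover have "DG (x, \<Phi> x) (0, 1) = DG (x, \<Phi> x) (0, 0)"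
      using z linear_0[OF bounded_linear.linear[OF C1d_bl[OF F US[OF that]]]] unfolding DG_def by (simp add: zero_prod_def)
    ultimately show False by (metis injD prod.inject zero_neq_one)
  qed
  have derPhi: "(\<Phi> has_derivative D\<Phi> x) (at x)" if x: "x \<in> U" for x
  proof -
    have d0: "((\<lambda>x. g (x, 0)) has_derivative (\<lambda>h. g' (x, 0) (h, 0))) (at x)"
      using diff_chain_at[OF has_derivative_Pair[OF has_derivative_ident has_derivative_const] dg[OF UV[OF x]]]
      by (simp add: o_def)
    have d1: "(\<Phi> has_derivative (\<lambda>h. snd (g' (x, 0) (h, 0)))) (at x)"
      unfolding \<Phi>_def by (rule has_derivative_snd[OF d0])
    let ?E = "\<lambda>h. snd (g' (x, 0) (h, 0))"
    have d2: "((\<lambda>x. F (x, \<Phi> x)) has_derivative (\<lambda>h. DF (x, \<Phi> x) (h, ?E h))) (at x)"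
      using diff_chain_at[OF has_derivative_Pair[OF has_derivative_ident d1] C1d_der[OF F US[OF x]]]
      by (simp add: o_def)
    have d3: "((\<lambda>x. 0::real) has_derivative (\<lambda>h. DF (x, \<Phi> x) (h, ?E h))) (at x)"
      by (rule has_derivative_transform_within_open[OF d2 oU x]) (use P1 in auto)
    have z: "DF (x, \<Phi> x) (h, ?E h) = 0" for h
      using has_derivative_unique[OF d3 has_derivative_const] by metis
    have "?E h = D\<Phi> x h" for h
      using z[of h] bl_split[OF C1d_bl[OF F US[OF x]], of h "?E h"] nzx[OF x]
      unfolding D\<Phi>_def by (simp add: field_simps)
    then show ?thesis using d1 by (metis (no_types) ext)
  qed
  have contD: "continuous_on U (\<lambda>x. D\<Phi> x h)" for h
  proof -
    have cP: "continuous_on U \<Phi>" using cPhi unfolding U_def by (rule continuous_on_subset) auto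
    have cxp: "continuous_on U (\<lambda>x. (x, \<Phi> x))" by (intro continuous_intros cP)
    have c1: "continuous_on U (\<lambda>x. DF (x, \<Phi> x) (h, 0))"
      using continuous_on_compose2[OF C1d_cont[OF F] cxp] US by blast
    have c2: "continuous_on U (\<lambda>x. DF (x, \<Phi> x) (0, 1))"
      using continuous_on_compose2[OF C1d_cont[OF F] cxp] US by blast
    show ?thesis unfolding D\<Phi>_def using c1 c2 nzx by (intro continuous_intros) auto
  qed
  have "C1d U \<Phi> D\<Phi>" unfolding C1d_def using derPhi contD by auto
  then show ?thesis using that[OF oU aU dpos _ Phia P1 P2 P3] by blast
qed

lemma local_lipschitz:
  fixes f :: "'a::euclidean_space \<Rightarrow> 'b::real_normed_vector"
  assumes Om: "open Om" and f: "C1d Om f D" and y: "y \<in> Om"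
  shows "\<exists>\<rho>>0. \<exists>L>0. cball y \<rho> \<subseteq> Om \<and>
           (\<forall>x\<in>cball y \<rho>. \<forall>x'\<in>cball y \<rho>. norm (f x - f x') \<le> L * norm (x - x'))"
proof -
  obtain \<rho> where \<rho>: "\<rho> > 0" "cball y \<rho> \<subseteq> Om" using open_contains_cball Om y by blast
  have c: "continuous_on (cball y \<rho>) (\<lambda>x. \<Sum>i\<in>Basis. norm (D x i))"
    using \<rho>(2) by (intro continuous_intros continuous_on_subset[OF C1d_cont[OF f]])
  have "bounded ((\<lambda>x. \<Sum>i\<in>Basis. norm (D x i)) ` cball y \<rho>)"
    by (rule compact_imp_bounded[OF compact_continuous_image[OF c compact_cball]])
  then obtain B where B: "\<forall>x\<in>cball y \<rho>. norm (\<Sum>i\<in>Basis. norm (D x i)) \<le> B"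
    unfolding bounded_iff by blast
  define L where "L = max B 1"
  have "norm (f x - f x') \<le> L * norm (x - x')" if "x \<in> cball y \<rho>" "x' \<in> cball y \<rho>" for x x'
  proof (rule differentiable_bound[OF convex_cball _ _ that])
    fix z assume z: "z \<in> cball y \<rho>"
    show "(f has_derivative D z) (at z within cball y \<rho>)"
      using C1d_der[OF f] \<rho>(2) z by (blast intro: has_derivative_at_withinI)
    have "onorm (D z) \<le> (\<Sum>i\<in>Basis. norm (D z i))"
      using onorm_componentwise C1d_bl[OF f] \<rho>(2) z by blast
    also have "\<dots> \<le> L" using B z unfolding L_def by force
    finally show "onorm (D z) \<le> L" .
  qed
  moreover have "L > 0" unfolding L_def by simp
  ultimately show ?thesis using \<rho> by blast
qed

lemma norm_integral_le:
  fixes g :: "real \<Rightarrow> 'a::euclidean_space"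
  assumes "continuous_on {a..b} g" "a \<le> b" "\<And>s. s \<in> {a..b} \<Longrightarrow> norm (g s) \<le> B"
  shows "norm (integral {a..b} g) \<le> B * (b - a)"
proof -
  have "norm (g a) \<le> B" using assms(2,3) by auto
  then have B: "0 \<le> B" by (meson norm_ge_zero order.trans)
  have "norm (integral {a..b} g) \<le> B * Henstock_Kurzweil_Integration.content {a..b}"
    by (rule has_integral_bound_real[OF B finite.emptyI integrable_integral[OF integrable_continuous_real[OF assms(1)]]])
       (use assms in auto)
  then show ?thesis using assms(2) by simp
qed

lemma ode_exists:
  fixes f :: "'a::euclidean_space \<Rightarrow> 'a"
  assumes Om: "open Om" and f: "C1d Om f D" and y0: "y0 \<in> Om"
  shows "\<exists>h>0. \<exists>u. u 0 = y0 \<and> continuous_on {0..h} u \<and>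
     (\<forall>t\<in>{0..h}. u t \<in> Om \<and> (u has_vector_derivative f (u t)) (at t within {0..h}))"
proof -
  obtain \<rho> L where \<rho>: "\<rho> > 0" "L > 0" "cball y0 \<rho> \<subseteq> Om"
    and lip: "\<forall>x\<in>cball y0 \<rho>. \<forall>x'\<in>cball y0 \<rho>. norm (f x - f x') \<le> L * norm (x - x')"
    using local_lipschitz[OF Om f y0] by blast
  define K where "K = cball y0 \<rho>"
  have Kne: "K \<noteq> {}" and Kc: "closed K" and Kv: "convex K" using \<rho> unfolding K_def by auto
  have fc: "continuous_on K f" using C1d_fcont[OF f] \<rho>(3) unfolding K_def by (rule continuous_on_subset)
  have "bounded (f ` K)" unfolding K_def
    by (rule compact_imp_bounded[OF compact_continuous_image[OF fc[unfolded K_def] compact_cball]])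
  then obtain B0 where B0: "\<forall>x\<in>K. norm (f x) \<le> B0" unfolding bounded_iff K_def by blast
  define B where "B = max B0 1"
  have Bp: "B > 0" unfolding B_def by simp
  have fB: "norm (f x) \<le> B" if "x \<in> K" for x using B0 that unfolding B_def by force
  define P where "P = closest_point K"
  have PK: "P x \<in> K" for x unfolding P_def by (rule closest_point_in_set[OF Kc Kne])
  have Plip: "norm (P x - P x') \<le> norm (x - x')" for x x'
    using closest_point_lipschitz[OF Kv Kc Kne, of x x'] unfolding P_def dist_norm .
  define ft where "ft = (\<lambda>x. f (P x))"
  have ftB: "norm (ft x) \<le> B" for x unfolding ft_def using fB PK by blast
  have ftlip: "norm (ft x - ft x') \<le> L * norm (x - x')" for x x'
  proof -
    have "norm (ft x - ft x') \<le> L * norm (P x - P x')" unfolding ft_def using lip PK unfolding K_def by blast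
    also have "\<dots> \<le> L * norm (x - x')" using Plip \<rho>(2) by (simp add: mult_left_mono)
    finally show ?thesis .
  qed
  have Pc: "continuous_on UNIV P"
    by (rule lipschitz_on_continuous_on[of 1]) (auto simp: lipschitz_on_def dist_norm Plip)
  have ftc: "continuous_on UNIV ft"
    unfolding ft_def using continuous_on_compose2[OF fc Pc] PK by blast
  define h where "h = min (\<rho> / B) (1 / (2 * L))"
  have hp: "h > 0" using \<rho> Bp unfolding h_def by simp
  have hB: "h * B \<le> \<rho>" using Bp unfolding h_def by (simp add: min_def field_simps)
  have hL: "h * L \<le> 1/2" using \<rho>(2) unfolding h_def by (simp add: min_def field_simps)
  define cl where "cl = (\<lambda>t::real. max 0 (min h t))"
  have cl: "cl t \<in> {0..h}" for t unfolding cl_def using hp by auto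
  have clc: "continuous_on UNIV cl" unfolding cl_def by (intro continuous_intros)
  have cl_id: "cl t = t" if "t \<in> {0..h}" for t using that unfolding cl_def by auto
  define Op where "Op = (\<lambda>u::real \<Rightarrow>\<^sub>C 'a. (\<lambda>t. y0 + integral {0..cl t} (\<lambda>s. ft (u s))))"
  have Opb: "Op u \<in> bcontfun" for u
  proof (rule bcontfun_normI)
    have gc: "continuous_on UNIV (\<lambda>s. ft (u s))"
      using continuous_on_compose2[OF ftc continuous_on_apply_bcontfun] by blast
    have ic: "continuous_on {0..h} (\<lambda>\<tau>. integral {0..\<tau>} (\<lambda>s. ft (u s)))"
      unfolding continuous_on_eq_continuous_within
      using integral_has_vector_derivative[OF continuous_on_subset[OF gc]]
      by (meson has_vector_derivative_continuous subset_UNIV)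
    have "continuous_on UNIV (\<lambda>t. integral {0..cl t} (\<lambda>s. ft (u s)))"
      by (rule continuous_on_compose2[OF ic clc]) (use cl in auto)
    then show "continuous_on UNIV (Op u)"
      unfolding Op_def by (intro continuous_intros)
    fix t
    have "norm (integral {0..cl t} (\<lambda>s. ft (u s))) \<le> B * (cl t - 0)"
      by (rule norm_integral_le[OF continuous_on_subset[OF gc]]) (use cl ftB in auto)
    also have "\<dots> \<le> B * h" using cl[of t] Bp by auto
    finally show "norm (Op u t) \<le> norm y0 + B * h" unfolding Op_def
      by (meson norm_triangle_le add_left_mono)
  qed
  define Tm :: "(real \<Rightarrow>\<^sub>C 'a) \<Rightarrow> (real \<Rightarrow>\<^sub>C 'a)" where "Tm = (\<lambda>u. Bcontfun (Op u))"
  have Tap: "apply_bcontfun (Tm u) = Op u" for u unfolding Tm_def using Opb by (simp add: Bcontfun_inverse)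
  have contr: "dist (Tm u) (Tm w) \<le> (1/2) * dist u w" for u w
  proof (rule dist_bound)
    fix t
    have gu: "continuous_on UNIV (\<lambda>s. ft (u s))" and gw: "continuous_on UNIV (\<lambda>s. ft (w s))"
      using continuous_on_compose2[OF ftc continuous_on_apply_bcontfun] by blast+
    have eqd: "Op u t - Op w t = integral {0..cl t} (\<lambda>s. ft (u s) - ft (w s))"
      unfolding Op_def
      by (simp add: integral_diff integrable_continuous_real continuous_on_subset[OF gu] continuous_on_subset[OF gw])
    have "norm (Op u t - Op w t) \<le> (L * dist u w) * (cl t - 0)"
      unfolding eqd
    proof (rule norm_integral_le)
      show "continuous_on {0..cl t} (\<lambda>s. ft (u s) - ft (w s))"
        by (intro continuous_intros continuous_on_subset[OF gu] continuous_on_subset[OF gw]) auto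
      show "0 \<le> cl t" using cl by auto
      fix s
      have "norm (ft (u s) - ft (w s)) \<le> L * norm (u s - w s)" by (rule ftlip)
      also have "\<dots> \<le> L * dist u w" using dist_bounded[of u s w] \<rho>(2) by (simp add: dist_norm mult_left_mono)
      finally show "norm (ft (u s) - ft (w s)) \<le> L * dist u w" .
    qed
    also have "\<dots> \<le> (L * dist u w) * h" using cl[of t] \<rho>(2) by (intro mult_left_mono) auto
    also have "\<dots> \<le> (1/2) * dist u w"
    proof -
      have "(L * dist u w) * h = (h * L) * dist u w" by simp
      also have "\<dots> \<le> (1/2) * dist u w" by (rule mult_right_mono[OF hL zero_le_dist])
      finally show ?thesis .
    qed
    finally show "dist (apply_bcontfun (Tm u) t) (apply_bcontfun (Tm w) t) \<le> (1/2) * dist u w"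
      unfolding Tap dist_norm .
  qed
  obtain u where fx: "Tm u = u" using banach_fix_type[of "1/2" Tm] contr by auto
  define y where "y = apply_bcontfun u"
  have yeq: "y t = y0 + integral {0..t} (\<lambda>s. ft (y s))" if "t \<in> {0..h}" for t
    using Tap[of u] fx cl_id[OF that] unfolding y_def Op_def by metis
  have gy: "continuous_on UNIV (\<lambda>s. ft (y s))"
    unfolding y_def using continuous_on_compose2[OF ftc continuous_on_apply_bcontfun] by blast
  have y00: "y 0 = y0" using yeq[of 0] hp by simp
  have yK: "y t \<in> K" if t: "t \<in> {0..h}" for t
  proof -
    have "norm (y t - y0) \<le> B * (t - 0)"
      using yeq[OF t] norm_integral_le[OF continuous_on_subset[OF gy], of 0 t B] t ftB by auto
    also have "\<dots> \<le> B * h" using t Bp by auto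
    also have "\<dots> \<le> \<rho>" using hB by (simp add: mult.commute)
    finally show ?thesis unfolding K_def by (simp add: dist_norm norm_minus_commute)
  qed
  have fty: "ft (y t) = f (y t)" if "t \<in> {0..h}" for t
    unfolding ft_def P_def using closest_point_self[OF yK[OF that]] by simp
  have der: "(y has_vector_derivative f (y t)) (at t within {0..h})" if t: "t \<in> {0..h}" for t
  proof -
    have "((\<lambda>t. y0 + integral {0..t} (\<lambda>s. ft (y s))) has_vector_derivative ft (y t)) (at t within {0..h})"
      using has_vector_derivative_add[OF has_vector_derivative_const integral_has_vector_derivative[OF continuous_on_subset[OF gy] t]] by simp
    then show ?thesis using fty[OF t] by (intro has_vector_derivative_transform[OF t yeq]) auto
  qed
  have yc: "continuous_on {0..h} y" unfolding y_def by simp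
  show ?thesis using hp y00 yc der yK \<rho>(3) unfolding K_def by blast
qed

lemma onorm_scaleR_vec: "onorm (\<lambda>s::real. s *\<^sub>R v) = norm (v::'a::real_normed_vector)"
  using onorm_scaleR_left[OF bounded_linear_ident, of v] by (simp add: onorm_id)

lemma local_unique:
  fixes f :: "'a::real_normed_vector \<Rightarrow> 'a"
  assumes lip: "\<forall>x\<in>K. \<forall>x'\<in>K. norm (f x - f x') \<le> L * norm (x - x')" and L: "0 \<le> L"
    and ab: "a \<le> b" "(b - a) * L < 1"
    and u: "\<forall>t\<in>{a..b}. u t \<in> K \<and> (u has_vector_derivative f (u t)) (at t within {a..b})"
    and w: "\<forall>t\<in>{a..b}. w t \<in> K \<and> (w has_vector_derivative f (w t)) (at t within {a..b})"
    and ua: "u a = w a"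
  shows "\<forall>t\<in>{a..b}. u t = w t"
proof -
  define e where "e = (\<lambda>t. u t - w t)"
  have de: "(e has_vector_derivative (f (u t) - f (w t))) (at t within {a..b})" if "t \<in> {a..b}" for t
    unfolding e_def using u w that by (intro has_vector_derivative_diff) auto
  have ec: "continuous_on {a..b} e"
    unfolding continuous_on_eq_continuous_within using de has_vector_derivative_continuous by blast
  have nec: "continuous_on {a..b} (\<lambda>t. norm (e t))" using ec by (intro continuous_intros)
  obtain tm where tm: "tm \<in> {a..b}" "\<forall>t\<in>{a..b}. norm (e t) \<le> norm (e tm)"
    using continuous_attains_sup[OF compact_Icc _ nec] ab(1) by auto
  define M where "M = norm (e tm)"
  have M0: "0 \<le> M" unfolding M_def by simp
  have bnd: "norm (e t - e a) \<le> (L * M) * norm (t - a)" if t: "t \<in> {a..b}" for t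
  proof (rule differentiable_bound[of "{a..b}" e "\<lambda>x s. s *\<^sub>R (f (u x) - f (w x))"])
    show "convex {a..b}" by (rule convex_real_interval)
    show "(e has_derivative (\<lambda>s. s *\<^sub>R (f (u x) - f (w x)))) (at x within {a..b})" if "x \<in> {a..b}" for x
      using de[OF that] unfolding has_vector_derivative_def .
    show "onorm (\<lambda>s. s *\<^sub>R (f (u x) - f (w x))) \<le> L * M" if x: "x \<in> {a..b}" for x
    proof -
      have "norm (f (u x) - f (w x)) \<le> L * norm (u x - w x)" using lip u w x by blast
      also have "\<dots> \<le> L * M" using tm(2) x L unfolding M_def e_def by (simp add: mult_left_mono)
      finally show ?thesis by (simp add: onorm_scaleR_vec)
    qed
    show "t \<in> {a..b}" "a \<in> {a..b}" using t ab by auto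
  qed
  have ea: "e a = 0" unfolding e_def using ua by simp
  have "M \<le> (L * M) * (b - a)"
  proof -
    have "M \<le> (L * M) * norm (tm - a)" using bnd[OF tm(1)] ea unfolding M_def by simp
    also have "\<dots> \<le> (L * M) * (b - a)" using tm(1) L M0 by (intro mult_left_mono) auto
    finally show ?thesis .
  qed
  have "M = 0"
  proof (rule ccontr)
    assume "M \<noteq> 0" then have Mp: "M > 0" using M0 by simp
    have "(L * M) * (b - a) = M * ((b - a) * L)" by simp
    also have "\<dots> < M * 1" using Mp ab(2) by (intro mult_strict_left_mono) auto
    finally show False using \<open>M \<le> (L * M) * (b - a)\<close> by simp
  qed
  then show ?thesis using tm(2) unfolding M_def e_def by auto
qed

definition C1e :: "'a::real_normed_vector set \<Rightarrow> ('a \<Rightarrow> 'b::real_normed_vector) \<Rightarrow> bool" where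
  "C1e S f \<longleftrightarrow> (\<exists>D. C1d S f D)"

lemma C1eI: "C1d S f D \<Longrightarrow> C1e S f" unfolding C1e_def by blast
lemma C1e_const: "C1e S (\<lambda>x. c)" by (rule C1eI[OF C1d_const])
lemma C1e_id: "C1e S (\<lambda>x. x)" by (rule C1eI[OF C1d_id])
lemma C1e_linear: "bounded_linear l \<Longrightarrow> C1e S l" by (rule C1eI[OF C1d_linear])
lemma C1e_add: "C1e S f \<Longrightarrow> C1e S g \<Longrightarrow> C1e S (\<lambda>x. f x + g x)"
  unfolding C1e_def by (blast intro: C1d_add)
lemma C1e_diff: "C1e S f \<Longrightarrow> C1e S g \<Longrightarrow> C1e S (\<lambda>x. f x - g x)"
  unfolding C1e_def by (blast intro: C1d_diff)
lemma C1e_minus: "C1e S f \<Longrightarrow> C1e S (\<lambda>x. - f x)"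
  unfolding C1e_def by (blast intro: C1d_minus)
lemma C1e_scaleR: "C1e S (f :: _ \<Rightarrow> real) \<Longrightarrow> C1e S g \<Longrightarrow> C1e S (\<lambda>x. f x *\<^sub>R g x)"
  unfolding C1e_def by (blast intro: C1d_scaleR)
lemma C1e_mult: "C1e S (f :: _ \<Rightarrow> real) \<Longrightarrow> C1e S g \<Longrightarrow> C1e S (\<lambda>x. f x * g x)"
  unfolding C1e_def by (blast intro: C1d_mult)
lemma C1e_Pair: "C1e S f \<Longrightarrow> C1e S g \<Longrightarrow> C1e S (\<lambda>x. (f x, g x))"
  unfolding C1e_def by (blast intro: C1d_Pair)
lemma C1e_subset: "C1e S f \<Longrightarrow> T \<subseteq> S \<Longrightarrow> C1e T f"
  unfolding C1e_def by (blast intro: C1d_subset)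
lemma C1e_fcont: "C1e S f \<Longrightarrow> continuous_on S f"
  unfolding C1e_def by (blast intro: C1d_fcont)
lemma C1e_compose:
  fixes f :: "'a::real_normed_vector \<Rightarrow> 'b::euclidean_space"
  shows "C1e S f \<Longrightarrow> C1e T g \<Longrightarrow> (\<And>x. x \<in> S \<Longrightarrow> f x \<in> T) \<Longrightarrow> C1e S (\<lambda>x. g (f x))"
  unfolding C1e_def by (blast intro: C1d_compose)
lemma C1e_sum: "finite I \<Longrightarrow> (\<And>i. i \<in> I \<Longrightarrow> C1e S (f i)) \<Longrightarrow> C1e S (\<lambda>x. \<Sum>i\<in>I. f i x)"
proof -
  assume fin: "finite I" and h: "\<And>i. i \<in> I \<Longrightarrow> C1e S (f i)"
  then obtain D where "\<And>i. i \<in> I \<Longrightarrow> C1d S (f i) (D i)" unfolding C1e_def by metis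
  then show ?thesis by (intro C1eI[OF C1d_sum[OF fin]])
qed
lemma C1e_inverse:
  fixes f :: "'a::real_normed_vector \<Rightarrow> real"
  shows "C1e S f \<Longrightarrow> (\<And>x. x \<in> S \<Longrightarrow> f x \<noteq> 0) \<Longrightarrow> C1e S (\<lambda>x. inverse (f x))"
  using C1e_compose[OF _ C1eI[OF C1d_inverse], of S f] by auto
lemma C1e_ln:
  fixes f :: "'a::real_normed_vector \<Rightarrow> real"
  shows "C1e S f \<Longrightarrow> (\<And>x. x \<in> S \<Longrightarrow> f x > 0) \<Longrightarrow> C1e S (\<lambda>x. ln (f x))"
  using C1e_compose[OF _ C1eI[OF C1d_ln], of S f] by auto
lemma C1e_C1_on: "C1e S (f::'a::euclidean_space \<Rightarrow> 'b::real_normed_vector) \<Longrightarrow> C1_on S f"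
  unfolding C1e_def by (blast intro: C1d_C1_on)
lemma C1_on_C1e: "C1_on S f \<Longrightarrow> C1e S f"
  unfolding C1e_def by (rule C1_on_C1d)

lemma vec_as_sum: "(\<chi> k. g k) = (\<Sum>k\<in>UNIV. g k *\<^sub>R axis k (1::real))"
  by (simp add: vec_eq_iff sum_component axis_def if_distrib cong: if_cong)

lemma C1e_vec:
  fixes g :: "'n::finite \<Rightarrow> 'a::real_normed_vector \<Rightarrow> real"
  shows "(\<And>k. C1e S (g k)) \<Longrightarrow> C1e S (\<lambda>x. \<chi> k. g k x)"
  unfolding vec_as_sum by (intro C1e_sum C1e_scaleR C1e_const) auto

lemma C1e_mu:
  fixes cf :: "'a::real_normed_vector \<Rightarrow> real^'n"
  assumes "C1e S cf" "C1e S phf" "\<And>x. x \<in> S \<Longrightarrow> pos_vec (cf x)" "\<forall>k. 0 < ce $ k"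
  shows "C1e S (\<lambda>x. mu z ce (cf x) (phf x))"
  unfolding mu_def
proof (intro C1e_vec C1e_add C1e_mult C1e_const assms(2))
  fix k
  have lk: "bounded_linear (\<lambda>c::real^'n. c $ k / ce $ k)"
    using bounded_linear_compose[OF bounded_linear_divide[of "ce $ k"] bounded_linear_vec_nth[of k]] by simp
  show "C1e S (\<lambda>x. ln (cf x $ k / ce $ k))"
    by (rule C1e_ln[OF C1e_compose[OF assms(1) C1e_linear[OF lk]]])
       (use assms(3,4) in \<open>auto simp: pos_vec_def\<close>)
qed

lemma hvd_scaleR:
  fixes v :: "real \<Rightarrow> real"
  assumes "(v has_vector_derivative v') (at t within S)" "(c has_vector_derivative c') (at t within S)"
  shows "((\<lambda>t. v t *\<^sub>R c t) has_vector_derivative (v t *\<^sub>R c' + v' *\<^sub>R c t)) (at t within S)"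
proof -
  have "((\<lambda>t. v t *\<^sub>R c t) has_derivative (\<lambda>h. v t *\<^sub>R (h *\<^sub>R c') + (h *\<^sub>R v') *\<^sub>R c t)) (at t within S)"
    using has_derivative_scaleR[OF assms(1)[unfolded has_vector_derivative_def]
        assms(2)[unfolded has_vector_derivative_def]] .
  moreover have "(\<lambda>h. v t *\<^sub>R (h *\<^sub>R c') + (h *\<^sub>R v') *\<^sub>R c t) = (\<lambda>h. h *\<^sub>R (v t *\<^sub>R c' + v' *\<^sub>R c t))"
    by (auto simp: algebra_simps)
  ultimately show ?thesis unfolding has_vector_derivative_def by simp
qed

lemma hvd_linear:
  assumes "bounded_linear l" "(g has_vector_derivative g') F"
  shows "((\<lambda>t. l (g t)) has_vector_derivative l g') F"
  using bounded_linear.has_derivative[OF assms(1) assms(2)[unfolded has_vector_derivative_def]]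
  unfolding has_vector_derivative_def by (simp add: bounded_linear.linear[OF assms(1)] linear_scale)

lemma submanifold_param:
  fixes \<psi> :: "'k::euclidean_space \<Rightarrow> 'a::euclidean_space"
  assumes W: "open W" and C: "C1e W \<psi>" and g: "bounded_linear g"
    and gp: "\<forall>w\<in>W. g (\<psi> w) = w" and M: "M = \<psi> ` W"
  shows "submanifold_dim TYPE('k) M"
proof -
  obtain D where D: "C1d W \<psi> D" using C unfolding C1e_def by blast
  have C1: "C1_on W \<psi>" by (rule C1e_C1_on[OF C])
  have inj: "\<forall>w\<in>W. inj (frechet_derivative \<psi> (at w))"
  proof
    fix w assume w: "w \<in> W"
    have fd: "frechet_derivative \<psi> (at w) = D w" using frechet_derivative_at[OF C1d_der[OF D w]] by simp
    have d1: "((\<lambda>x. g (\<psi> x)) has_derivative (\<lambda>h. g (D w h))) (at w)"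
      by (rule bounded_linear.has_derivative[OF g C1d_der[OF D w]])
    have d2: "((\<lambda>x. x) has_derivative (\<lambda>h. g (D w h))) (at w)"
      by (rule has_derivative_transform_within_open[OF d1 W w]) (use gp in auto)
    have "(\<lambda>h. g (D w h)) = (\<lambda>h. h)" using has_derivative_unique[OF d2 has_derivative_ident] .
    then have "inj (D w)" by (metis injI)
    then show "inj (frechet_derivative \<psi> (at w))" using fd by simp
  qed
  have hom: "homeomorphism W (M \<inter> UNIV) \<psi> g"
    unfolding homeomorphism_def
  proof (intro conjI)
    show "continuous_on W \<psi>" by (rule C1e_fcont[OF C])
    show "\<psi> ` W = M \<inter> UNIV" using M by simp
    show "continuous_on (M \<inter> UNIV) g" by (rule linear_continuous_on[OF g])
    show "g ` (M \<inter> UNIV) = W" using M gp by force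
    show "\<forall>x\<in>W. g (\<psi> x) = x" by fact
    show "\<forall>y\<in>M \<inter> UNIV. \<psi> (g y) = y" using M gp by auto
  qed
  show ?thesis unfolding submanifold_dim_def
    using W C1 inj hom by (intro ballI exI[of _ UNIV] exI[of _ W] exI[of _ \<psi>] exI[of _ g]) auto
qed

lemma eq_left_limit:
  fixes f g :: "real \<Rightarrow> 'a::metric_space"
  assumes t1: "0 < t1" and f: "continuous (at t1 within {0..t1}) f" and g: "continuous (at t1 within {0..t1}) g"
    and eq: "\<forall>s\<in>{0..<t1}. f s = g s"
  shows "f t1 = g t1"
proof -
  have F: "at t1 within {0..t1} = at_left t1" by (rule at_within_Icc_at_left[OF t1])
  have lf: "(f \<longlongrightarrow> f t1) (at_left t1)" using f unfolding continuous_within F .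
  have lg: "(g \<longlongrightarrow> g t1) (at_left t1)" using g unfolding continuous_within F .
  have ev: "\<forall>\<^sub>F s in at_left t1. f s = g s"
    using eventually_at_left_real[OF t1] by eventually_elim (use eq in auto)
  have "(g \<longlongrightarrow> f t1) (at_left t1)" using tendsto_cong[OF ev] lf by simp
  then show ?thesis using tendsto_unique[OF trivial_limit_at_left_real lg] by simp
qed

lemma uniq_abstract:
  fixes f :: "'a::euclidean_space \<Rightarrow> 'a" and G :: "'a \<Rightarrow> real"
  assumes Om: "open Om" and f: "C1e Om f" and Gc: "continuous_on Om G" and GK: "\<forall>y\<in>Om. \<bar>G y\<bar> < K"
    and h: "0 < h"
    and y1: "\<forall>t\<in>{0..h}. y1 t \<in> Om \<and> (y1 has_vector_derivative f (y1 t)) (at t within {0..h})"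
    and y2c: "continuous_on {0..<T'} y2" and p2c: "continuous_on {0..<T'} p2"
    and y2: "\<forall>t\<in>{0..<T'}. y2 t \<in> Om \<and> \<bar>p2 t\<bar> < K \<longrightarrow>
               p2 t = G (y2 t) \<and> (y2 has_vector_derivative f (y2 t)) (at t within {0..<T'})"
    and i1: "y2 0 = y1 0" and i2: "p2 0 = G (y1 0)"
  shows "\<forall>t\<in>{0..<min h T'}. y2 t = y1 t \<and> p2 t = G (y1 t)"
proof (rule ccontr)
  obtain D where fD: "C1d Om f D" using f unfolding C1e_def by blast
  define m where "m = min h T'"
  define B where "B = {t\<in>{0..<m}. \<not> (y2 t = y1 t \<and> p2 t = G (y1 t))}"
  assume "\<not> (\<forall>t\<in>{0..<min h T'}. y2 t = y1 t \<and> p2 t = G (y1 t))"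
  then have Bne: "B \<noteq> {}" unfolding B_def m_def by auto
  have Bbdd: "bdd_below B" unfolding B_def by (rule bdd_belowI[of _ 0]) auto
  define t1 where "t1 = Inf B"
  have t10: "0 \<le> t1" unfolding t1_def using Bne by (intro cInf_greatest) (auto simp: B_def)
  obtain b0 where b0: "b0 \<in> B" using Bne by blast
  have t1m: "t1 < m" using cInf_lower[OF b0 Bbdd] b0 unfolding t1_def B_def by auto
  have mh: "m \<le> h" and mT: "m \<le> T'" unfolding m_def by auto
  have y1c: "continuous_on {0..h} y1"
    unfolding continuous_on_eq_continuous_within using y1 has_vector_derivative_continuous by blast
  have Gy1c: "continuous_on {0..h} (\<lambda>t. G (y1 t))"
    using continuous_on_compose2[OF Gc y1c] y1 by blast
  have below: "\<forall>s\<in>{0..<t1}. y2 s = y1 s \<and> p2 s = G (y1 s)"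
  proof
    fix s assume s: "s \<in> {0..<t1}"
    show "y2 s = y1 s \<and> p2 s = G (y1 s)"
    proof (rule ccontr)
      assume "\<not> ?thesis"
      then have "s \<in> B" using s t1m unfolding B_def by auto
      then have "t1 \<le> s" unfolding t1_def by (rule cInf_lower[OF _ Bbdd])
      then show False using s by auto
    qed
  qed
  have at1: "y2 t1 = y1 t1 \<and> p2 t1 = G (y1 t1)"
  proof (cases "t1 = 0")
    case True then show ?thesis using i1 i2 by simp
  next
    case False
    then have t1p: "0 < t1" using t10 by simp
    have sub1: "{0..t1} \<subseteq> {0..<T'}" using t1m mT by auto
    have sub2: "{0..t1} \<subseteq> {0..h}" using t1m mh by auto
    have c1: "continuous (at t1 within {0..t1}) y2"
      using continuous_on_subset[OF y2c sub1] t10 by (simp add: continuous_on_eq_continuous_within)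
    have c2: "continuous (at t1 within {0..t1}) y1"
      using continuous_on_subset[OF y1c sub2] t10 by (simp add: continuous_on_eq_continuous_within)
    have c3: "continuous (at t1 within {0..t1}) p2"
      using continuous_on_subset[OF p2c sub1] t10 by (simp add: continuous_on_eq_continuous_within)
    have c4: "continuous (at t1 within {0..t1}) (\<lambda>t. G (y1 t))"
      using continuous_on_subset[OF Gy1c sub2] t10 by (simp add: continuous_on_eq_continuous_within)
    show ?thesis
      using eq_left_limit[OF t1p c1 c2] eq_left_limit[OF t1p c3 c4] below by auto
  qed
  define ps where "ps = y1 t1"
  have psO: "ps \<in> Om" unfolding ps_def using y1 t10 t1m mh by auto
  obtain \<rho> L where \<rho>: "\<rho> > 0" "L > 0" "cball ps \<rho> \<subseteq> Om"
    and lip: "\<forall>x\<in>cball ps \<rho>. \<forall>x'\<in>cball ps \<rho>. norm (f x - f x') \<le> L * norm (x - x')"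
    using local_lipschitz[OF Om fD psO] by blast
  have t1in: "t1 \<in> {0..<m}" using t10 t1m by auto
  have subm1: "{0..<m} \<subseteq> {0..<T'}" and subm2: "{0..<m} \<subseteq> {0..h}" using mh mT by auto
  have cy2: "continuous (at t1 within {0..<m}) y2"
    using continuous_on_subset[OF y2c subm1] t1in by (simp add: continuous_on_eq_continuous_within)
  have cy1: "continuous (at t1 within {0..<m}) y1"
    using continuous_on_subset[OF y1c subm2] t1in by (simp add: continuous_on_eq_continuous_within)
  have cp2: "continuous (at t1 within {0..<m}) p2"
    using continuous_on_subset[OF p2c subm1] t1in by (simp add: continuous_on_eq_continuous_within)
  obtain d1 where d1: "d1 > 0" "\<forall>t\<in>{0..<m}. dist t t1 < d1 \<longrightarrow> dist (y2 t) (y2 t1) < \<rho>"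
    using cy2 \<rho>(1) unfolding continuous_within_eps_delta by blast
  obtain d2 where d2: "d2 > 0" "\<forall>t\<in>{0..<m}. dist t t1 < d2 \<longrightarrow> dist (y1 t) (y1 t1) < \<rho>"
    using cy1 \<rho>(1) unfolding continuous_within_eps_delta by blast
  have Kp: "K - \<bar>p2 t1\<bar> > 0" using at1 GK psO unfolding ps_def by auto
  obtain d3 where d3: "d3 > 0" "\<forall>t\<in>{0..<m}. dist t t1 < d3 \<longrightarrow> dist (p2 t) (p2 t1) < K - \<bar>p2 t1\<bar>"
    using cp2 Kp unfolding continuous_within_eps_delta by blast
  define e where "e = min (min (d1/2) (d2/2)) (min (d3/2) (min ((m - t1)/2) (1 / (2 * L))))"
  have ep: "e > 0" unfolding e_def using d1 d2 d3 t1m \<rho> by simp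
  have "e \<le> (m - t1)/2" unfolding e_def by linarith
  then have sub: "{t1..t1+e} \<subseteq> {0..<m}" using t10 t1m by auto
  have close: "dist t t1 < d1 \<and> dist t t1 < d2 \<and> dist t t1 < d3" if "t \<in> {t1..t1+e}" for t
    using that d1 d2 d3 unfolding e_def dist_real_def by auto
  have in1: "y1 t \<in> cball ps \<rho>" if "t \<in> {t1..t1+e}" for t
  proof -
    have tm: "t \<in> {0..<m}" using sub that by blast
    have "dist (y1 t) (y1 t1) < \<rho>" using d2(2) tm close[OF that] by blast
    then show ?thesis unfolding ps_def by (simp add: dist_commute)
  qed
  have in2: "y2 t \<in> cball ps \<rho>" if "t \<in> {t1..t1+e}" for t
  proof -
    have tm: "t \<in> {0..<m}" using sub that by blast
    have "dist (y2 t) (y2 t1) < \<rho>" using d1(2) tm close[OF that] by blast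
    then show ?thesis unfolding ps_def using at1 by (simp add: dist_commute)
  qed
  have pK: "\<bar>p2 t\<bar> < K" if "t \<in> {t1..t1+e}" for t
  proof -
    have tm: "t \<in> {0..<m}" using sub that by blast
    have "dist (p2 t) (p2 t1) < K - \<bar>p2 t1\<bar>" using d3(2) tm close[OF that] by blast
    then show ?thesis unfolding dist_real_def by linarith
  qed
  have u1: "\<forall>t\<in>{t1..t1+e}. y1 t \<in> cball ps \<rho> \<and> (y1 has_vector_derivative f (y1 t)) (at t within {t1..t1+e})"
    using in1 y1 sub subm2 by (meson has_vector_derivative_within_subset subset_trans subsetD)
  have u2: "\<forall>t\<in>{t1..t1+e}. y2 t \<in> cball ps \<rho> \<and> (y2 has_vector_derivative f (y2 t)) (at t within {t1..t1+e})"
  proof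
    fix t assume t: "t \<in> {t1..t1+e}"
    have "y2 t \<in> Om" using in2[OF t] \<rho>(3) by blast
    then have "(y2 has_vector_derivative f (y2 t)) (at t within {0..<T'})"
      using y2 pK[OF t] sub subm1 t by blast
    then show "y2 t \<in> cball ps \<rho> \<and> (y2 has_vector_derivative f (y2 t)) (at t within {t1..t1+e})"
      using in2[OF t] sub subm1 by (meson has_vector_derivative_within_subset subset_trans)
  qed
  have eL: "(t1 + e - t1) * L < 1"
  proof -
    have "e \<le> 1 / (2 * L)" unfolding e_def by simp
    then have "e * L \<le> 1/2" using \<rho>(2) by (simp add: field_simps)
    then show ?thesis by simp
  qed
  have agree: "\<forall>t\<in>{t1..t1+e}. y1 t = y2 t"
    by (rule local_unique[OF lip less_imp_le[OF \<rho>(2)] _ eL u1 u2]) (use ep at1 in auto)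
  have "Inf B < t1 + e" using ep unfolding t1_def by simp
  then obtain b where b: "b \<in> B" "b < t1 + e" using cInf_less_iff[OF Bne Bbdd] by blast
  have "t1 \<le> b" unfolding t1_def by (rule cInf_lower[OF b(1) Bbdd])
  then have bi: "b \<in> {t1..t1+e}" using b by auto
  have "y2 b \<in> Om" using in2[OF bi] \<rho>(3) by blast
  then have "p2 b = G (y2 b)" using y2 pK[OF bi] sub subm1 bi by blast
  then have "y2 b = y1 b \<and> p2 b = G (y1 b)" using agree bi by auto
  then show False using b(1) unfolding B_def by auto
qed

lemma C1e_cong: "C1e S f \<Longrightarrow> (\<And>x. f x = g x) \<Longrightarrow> C1e S g"
  by (metis ext)

definition Fm :: "real^'n \<Rightarrow> real^'n \<Rightarrow> (real \<Rightarrow> real^'n \<Rightarrow> real^'n) \<Rightarrow> (real \<Rightarrow> real^'n \<Rightarrow> real^'n)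
   \<Rightarrow> ((real^'n) \<times> real) \<times> real \<Rightarrow> real" where
  "Fm z ce j p w = z \<bullet> (j (snd w) (mu z ce (fst (fst w)) (snd w)) + snd (fst w) *\<^sub>R p (snd w) (fst (fst w)))"

lemma Fm_I: "Fm z ce j p ((c, \<alpha>), \<phi>) = I_alpha z ce j p \<alpha> c \<phi>"
  by (simp add: Fm_def I_alpha_def)

context
  fixes z ce :: "real^'n" and A zA :: real
    and j p :: "real \<Rightarrow> real^'n \<Rightarrow> real^'n" and jw :: "real \<Rightarrow> real"
  assumes z0: "z \<noteq> 0"
    and ce0: "\<forall>k. 0 < ce $ k"
    and zce: "(\<Sum>k\<in>UNIV. z $ k * ce $ k) = 0"
    and A0: "0 < A"
    and jC: "C1_on UNIV (\<lambda>(\<phi>, \<mu>). j \<phi> \<mu>)"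
    and pC: "C1_on {(\<phi>, c). pos_vec c} (\<lambda>(\<phi>, c). p \<phi> c)"
    and jwC: "C1_on UNIV jw"
    and j0: "\<forall>\<phi>. j \<phi> 0 = 0"
    and jpd: "\<forall>\<phi>. transpose (matrix (frechet_derivative (j \<phi>) (at 0))) = matrix (frechet_derivative (j \<phi>) (at 0))
             \<and> (\<forall>x. x \<noteq> 0 \<longrightarrow> 0 < x \<bullet> (matrix (frechet_derivative (j \<phi>) (at 0)) *v x))"
begin

lemma Fm_C1e: "C1e {w. pos_vec (fst (fst w))} (Fm z ce j p)"
proof -
  let ?S = "{w::((real^'n) \<times> real) \<times> real. pos_vec (fst (fst w))}"
  have cf: "C1e ?S (\<lambda>w. fst (fst w))"
    by (rule C1e_linear, rule bounded_linear_compose[OF bounded_linear_fst bounded_linear_fst])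
  have sf: "C1e ?S (\<lambda>w. snd (fst w))"
    by (rule C1e_linear, rule bounded_linear_compose[OF bounded_linear_snd bounded_linear_fst])
  have ph: "C1e ?S (\<lambda>w. snd w)" by (rule C1e_linear[OF bounded_linear_snd])
  have m: "C1e ?S (\<lambda>w. mu z ce (fst (fst w)) (snd w))"
    by (rule C1e_mu[OF cf ph _ ce0]) auto
  have J: "C1e ?S (\<lambda>w. (\<lambda>(\<phi>, \<mu>). j \<phi> \<mu>) (snd w, mu z ce (fst (fst w)) (snd w)))"
    by (rule C1e_compose[OF C1e_Pair[OF ph m] C1_on_C1e[OF jC]]) auto
  have P: "C1e ?S (\<lambda>w. (\<lambda>(\<phi>, c). p \<phi> c) (snd w, fst (fst w)))"
    by (rule C1e_compose[OF C1e_Pair[OF ph cf] C1_on_C1e[OF pC]]) auto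
  have sum: "C1e ?S (\<lambda>w. (\<lambda>(\<phi>, \<mu>). j \<phi> \<mu>) (snd w, mu z ce (fst (fst w)) (snd w))
              + snd (fst w) *\<^sub>R (\<lambda>(\<phi>, c). p \<phi> c) (snd w, fst (fst w)))"
    by (rule C1e_add[OF J C1e_scaleR[OF sf P]])
  have "C1e ?S (\<lambda>w. z \<bullet> ((\<lambda>(\<phi>, \<mu>). j \<phi> \<mu>) (snd w, mu z ce (fst (fst w)) (snd w))
              + snd (fst w) *\<^sub>R (\<lambda>(\<phi>, c). p \<phi> c) (snd w, fst (fst w))))"
    by (rule C1e_compose[OF sum C1e_linear[OF bounded_linear_inner_right]]) auto
  then show ?thesis by (rule C1e_cong) (simp add: Fm_def)
qed

lemma mu_ce: "mu z ce ce \<phi> = \<phi> *\<^sub>R z"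
  using ce0 by (simp add: mu_def vec_eq_iff less_imp_neq[symmetric] mult.commute)

lemma Fm_deriv_pos:
  assumes DF: "C1d {w. pos_vec (fst (fst w))} (Fm z ce j p) DF"
  shows "DF ((ce, 0), 0) ((0, 0), 1) > 0"
proof -
  let ?J = "\<lambda>(\<phi>, \<mu>). j \<phi> \<mu>"
  let ?w0 = "((ce, 0::real), 0::real)"
  obtain Dj where Dj: "C1d UNIV ?J Dj" using C1_on_C1d[OF jC] by blast
  have w0S: "?w0 \<in> {w. pos_vec (fst (fst w))}" using ce0 by (simp add: pos_vec_def)
  have dJ: "(?J has_derivative Dj (0, 0)) (at (0, 0))" using C1d_der[OF Dj] by simp
  have blJ: "bounded_linear (Dj (0, 0))" using C1d_bl[OF Dj] by simp
  have r1: "((\<lambda>\<phi>. Fm z ce j p ((ce, 0), \<phi>)) has_derivative (\<lambda>s. DF ?w0 ((0, 0), s))) (at 0)"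
    using diff_chain_at[OF has_derivative_Pair[OF has_derivative_const has_derivative_ident] C1d_der[OF DF w0S]]
    by (simp add: o_def zero_prod_def)
  have req: "Fm z ce j p ((ce, 0), \<phi>) = z \<bullet> ?J (\<phi>, \<phi> *\<^sub>R z)" for \<phi>
    by (simp add: Fm_def mu_ce)
  have r2: "((\<lambda>\<phi>. z \<bullet> ?J (\<phi>, \<phi> *\<^sub>R z)) has_derivative (\<lambda>s. z \<bullet> Dj (0, 0) (s, s *\<^sub>R z))) (at 0)"
  proof -
    have "((\<lambda>\<phi>::real. (\<phi>, \<phi> *\<^sub>R z)) has_derivative (\<lambda>s. (s, s *\<^sub>R z))) (at 0)"
      by (intro derivative_eq_intros) auto
    from diff_chain_at[OF this, of ?J "Dj (0, 0)"] dJ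
    have "((\<lambda>\<phi>. ?J (\<phi>, \<phi> *\<^sub>R z)) has_derivative (\<lambda>s. Dj (0, 0) (s, s *\<^sub>R z))) (at 0)"
      by (simp add: o_def)
    from bounded_linear.has_derivative[OF bounded_linear_inner_right this]
    show ?thesis .
  qed
  have e1: "DF ?w0 ((0, 0), 1) = z \<bullet> Dj (0, 0) (1, z)"
    using has_derivative_unique[OF r1, of "\<lambda>s. z \<bullet> Dj (0, 0) (s, s *\<^sub>R z)"] r2 req
    by (metis (no_types, lifting) ext scaleR_one)
  have a1: "((\<lambda>\<phi>::real. ?J (\<phi>, 0)) has_derivative (\<lambda>s. Dj (0, 0) (s, 0))) (at 0)"
    using diff_chain_at[OF has_derivative_Pair[OF has_derivative_ident has_derivative_const] dJ]
    by (simp add: o_def)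
  have "(\<lambda>\<phi>::real. ?J (\<phi>, 0)) = (\<lambda>\<phi>. 0)" using j0 by simp
  then have a2: "(\<lambda>s. Dj (0, 0) (s, 0)) = (\<lambda>s::real. 0)"
    using has_derivative_unique[OF a1] has_derivative_const by metis
  have b1: "((\<lambda>\<mu>. ?J (0, \<mu>)) has_derivative (\<lambda>w. Dj (0, 0) (0, w))) (at 0)"
    using diff_chain_at[OF has_derivative_Pair[OF has_derivative_const has_derivative_ident] dJ]
    by (simp add: o_def)
  then have b2: "(j 0 has_derivative (\<lambda>w. Dj (0, 0) (0, w))) (at 0)" by simp
  define L where "L = frechet_derivative (j 0) (at 0)"
  have Leq: "L = (\<lambda>w. Dj (0, 0) (0, w))" unfolding L_def using frechet_derivative_at[OF b2] by simp
  have blL: "bounded_linear L" using has_derivative_bounded_linear[OF b2] Leq by simp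
  have "0 < z \<bullet> (matrix L *v z)" using jpd z0 unfolding L_def by blast
  then have pos: "0 < z \<bullet> L z" using blL by (simp add: matrix_works bounded_linear.linear)
  have split: "Dj (0, 0) (1, z) = Dj (0, 0) (1, 0) + Dj (0, 0) (0, z)"
    using linear_add[OF bounded_linear.linear[OF blJ], of "(1, 0)" "(0, z)"] by simp
  have "DF ?w0 ((0, 0), 1) = z \<bullet> L z"
    unfolding e1 split Leq using fun_cong[OF a2, of 1] by simp
  then show ?thesis using pos by simp
qed

lemma implicit_Phi:
  obtains K K\<alpha> \<Phi> where "K > 0" "K\<alpha> > 0"
    "C1e {(c, \<alpha>). norm (c - ce) < K \<and> \<bar>\<alpha>\<bar> < K\<alpha>} \<Phi>"
    "\<forall>c \<alpha>. norm (c - ce) < K \<and> \<bar>\<alpha>\<bar> < K\<alpha> \<longrightarrow> I_alpha z ce j p \<alpha> c (\<Phi> (c, \<alpha>)) = 0"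
    "\<forall>c \<alpha> \<phi>. norm (c - ce) < K \<and> \<bar>\<alpha>\<bar> < K\<alpha> \<and> \<bar>\<phi>\<bar> < K \<and> I_alpha z ce j p \<alpha> c \<phi> = 0 \<longrightarrow> \<phi> = \<Phi> (c, \<alpha>)"
    "\<forall>c. norm (c - ce) < K \<longrightarrow> pos_vec c"
proof -
  let ?S = "{w::((real^'n) \<times> real) \<times> real. pos_vec (fst (fst w))}"
  obtain DF where DF: "C1d ?S (Fm z ce j p) DF" using Fm_C1e unfolding C1e_def by blast
  have oS: "open ?S"
  proof -
    have "?S = (\<Inter>k\<in>UNIV. {w. 0 < fst (fst w) $ k})" by (auto simp: pos_vec_def)
    moreover have "open {w::((real^'n) \<times> real) \<times> real. 0 < fst (fst w) $ k}" for k
      by (intro open_Collect_less continuous_intros)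
    ultimately show ?thesis by (auto intro: open_INT)
  qed
  have w0S: "((ce, 0), 0) \<in> ?S" using ce0 by (simp add: pos_vec_def)
  have F0: "Fm z ce j p ((ce, 0), 0) = 0" using j0 by (simp add: Fm_def mu_ce)
  have nz: "DF ((ce, 0), 0) (0, 1) \<noteq> 0" using Fm_deriv_pos[OF DF] by (simp add: zero_prod_def)
  obtain U \<delta> \<Phi> D\<Phi> where U: "open U" "(ce, 0) \<in> U" and \<delta>: "\<delta> > 0" and CP: "C1d U \<Phi> D\<Phi>"
    and "\<Phi> (ce, 0) = 0"
    and P1: "\<forall>x\<in>U. \<bar>\<Phi> x - 0\<bar> < \<delta> \<and> Fm z ce j p (x, \<Phi> x) = 0"
    and "\<forall>x\<in>U. \<forall>y. \<bar>y - 0\<bar> < \<delta> \<longrightarrow> (x, y) \<in> ?S"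
    and P3: "\<forall>x\<in>U. \<forall>y. \<bar>y - 0\<bar> < \<delta> \<and> Fm z ce j p (x, y) = 0 \<longrightarrow> y = \<Phi> x"
    by (rule IFT[OF oS DF w0S F0 nz])
  obtain \<epsilon> where \<epsilon>: "\<epsilon> > 0" "ball (ce, 0) \<epsilon> \<subseteq> U" using U openE by blast
  define mce where "mce = Min (range (\<lambda>k. ce $ k))"
  have mce: "mce > 0" unfolding mce_def using ce0 by (simp add: Min_gr_iff)
  have mle: "mce \<le> ce $ k" for k unfolding mce_def by (simp add: Min_le)
  define K where "K = min (\<epsilon>/2) (min \<delta> mce)"
  define K\<alpha> where "K\<alpha> = \<epsilon>/2"
  have Kp: "K > 0" "K\<alpha> > 0" unfolding K_def K\<alpha>_def using \<epsilon> \<delta> mce by auto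
  have boxU: "(c, \<alpha>) \<in> U" if "norm (c - ce) < K" "\<bar>\<alpha>\<bar> < K\<alpha>" for c \<alpha>
  proof -
    have "norm ((ce, 0) - (c, \<alpha>)) \<le> norm (ce - c) + norm (0 - \<alpha>)"
      using norm_Pair_le[of "ce - c" "0 - \<alpha>"] by simp
    also have "\<dots> < \<epsilon>" using that unfolding K_def K\<alpha>_def by (simp add: norm_minus_commute)
    finally show ?thesis using \<epsilon>(2) by (auto simp: dist_norm)
  qed
  have pos: "\<forall>c. norm (c - ce) < K \<longrightarrow> pos_vec c"
  proof (intro allI impI)
    fix c :: "real^'n" assume "norm (c - ce) < K"
    then have "norm (c - ce) < mce" unfolding K_def by simp
    then have a: "\<bar>c $ k - ce $ k\<bar> < mce" for k using component_le_norm_cart[of "c - ce" k] by simp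
    have "0 < c $ k" for k
    proof -
      have "- mce < c $ k - ce $ k" using a[of k] by (simp add: abs_less_iff)
      then show ?thesis using mle[of k] by linarith
    qed
    then show "pos_vec c" unfolding pos_vec_def by blast
  qed
  have C: "C1e {(c, \<alpha>). norm (c - ce) < K \<and> \<bar>\<alpha>\<bar> < K\<alpha>} \<Phi>"
    by (rule C1e_subset[OF C1eI[OF CP]]) (use boxU in auto)
  have I1: "\<forall>c \<alpha>. norm (c - ce) < K \<and> \<bar>\<alpha>\<bar> < K\<alpha> \<longrightarrow> I_alpha z ce j p \<alpha> c (\<Phi> (c, \<alpha>)) = 0"
    using P1 boxU by (auto simp: Fm_I[symmetric])
  have I2: "\<forall>c \<alpha> \<phi>. norm (c - ce) < K \<and> \<bar>\<alpha>\<bar> < K\<alpha> \<and> \<bar>\<phi>\<bar> < K \<and> I_alpha z ce j p \<alpha> c \<phi> = 0 \<longrightarrow> \<phi> = \<Phi> (c, \<alpha>)"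
  proof (intro allI impI)
    fix c \<alpha> \<phi> assume h: "norm (c - ce) < K \<and> \<bar>\<alpha>\<bar> < K\<alpha> \<and> \<bar>\<phi>\<bar> < K \<and> I_alpha z ce j p \<alpha> c \<phi> = 0"
    have "\<bar>\<phi> - 0\<bar> < \<delta>" using h unfolding K_def by simp
    then show "\<phi> = \<Phi> (c, \<alpha>)" using P3 boxU h by (auto simp: Fm_I)
  qed
  show ?thesis using that[OF Kp C I1 I2 pos] .
qed

end

lemma Qf_inner: "Qf z zA A c v = z \<bullet> c + zA * A / v"
  by (simp add: Qf_def inner_vec_def)

lemma open_sub_vimage:
  assumes "open B" "continuous_on B f" "open T"
  shows "open {x\<in>B. f x \<in> T}"
proof -
  have "open (f -` T \<inter> B)" using assms continuous_on_open_vimage by blast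
  moreover have "{x\<in>B. f x \<in> T} = f -` T \<inter> B" by auto
  ultimately show ?thesis by simp
qed

lemma solve_x:
  fixes x c J P :: "'a::real_vector"
  assumes "v \<noteq> 0" "v *\<^sub>R x + (- a) *\<^sub>R c = - J - P"
  shows "x = inverse v *\<^sub>R (a *\<^sub>R c - J - P)"
proof -
  have "v *\<^sub>R x = a *\<^sub>R c - J - P" using assms(2) by (simp add: algebra_simps)
  then have "inverse v *\<^sub>R (v *\<^sub>R x) = inverse v *\<^sub>R (a *\<^sub>R c - J - P)" by simp
  then show ?thesis using assms(1) by simp
qed

lemma hvd_unique_Ico:
  assumes "0 \<le> t" "t < T" "(f has_vector_derivative a) (at t within {0..<T})"
    "(f has_vector_derivative b) (at t within {0..<T})"
  shows "a = b"
proof -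
  define \<tau> where "\<tau> = (t + T) / 2"
  have sub: "{t..\<tau>} \<subseteq> {0..<T}" using assms(1,2) unfolding \<tau>_def by auto
  have lt: "t < \<tau>" using assms(2) unfolding \<tau>_def by simp
  show ?thesis
    using vector_derivative_unique_within_closed_interval[of t \<tau> t f a b] lt
      has_vector_derivative_within_subset[OF assms(3) sub] has_vector_derivative_within_subset[OF assms(4) sub]
    by (simp add: cbox_interval)
qed

context
  fixes z ce :: "real^'n" and A zA :: real
    and j p :: "real \<Rightarrow> real^'n \<Rightarrow> real^'n" and jw :: "real \<Rightarrow> real"
    and K K\<alpha> :: real and \<Phi> :: "(real^'n) \<times> real \<Rightarrow> real" and \<alpha> :: real
  assumes z0: "z \<noteq> 0"
    and ce0: "\<forall>k. 0 < ce $ k"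
    and A0: "0 < A"
    and jC: "C1_on UNIV (\<lambda>(\<phi>, \<mu>). j \<phi> \<mu>)"
    and pC: "C1_on {(\<phi>, c). pos_vec c} (\<lambda>(\<phi>, c). p \<phi> c)"
    and jwC: "C1_on UNIV jw"
    and Kp: "K > 0"
    and PC: "C1e {(c, \<alpha>). norm (c - ce) < K \<and> \<bar>\<alpha>\<bar> < K\<alpha>} \<Phi>"
    and I1: "\<forall>c \<alpha>. norm (c - ce) < K \<and> \<bar>\<alpha>\<bar> < K\<alpha> \<longrightarrow> I_alpha z ce j p \<alpha> c (\<Phi> (c, \<alpha>)) = 0"
    and I2: "\<forall>c \<alpha> \<phi>. norm (c - ce) < K \<and> \<bar>\<alpha>\<bar> < K\<alpha> \<and> \<bar>\<phi>\<bar> < K \<and> I_alpha z ce j p \<alpha> c \<phi> = 0 \<longrightarrow> \<phi> = \<Phi> (c, \<alpha>)"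
    and pos: "\<forall>c. norm (c - ce) < K \<longrightarrow> pos_vec c"
    and al: "\<bar>\<alpha>\<bar> < K\<alpha>"
begin

lemma M_char:
  "Cyl ce K \<inter> Gamma z ce A zA j p \<alpha> =
     {(c, v, \<phi>). norm (c - ce) < K \<and> 0 < v \<and> Qf z zA A c v = 0 \<and> \<bar>\<Phi> (c, \<alpha>)\<bar> < K \<and> \<phi> = \<Phi> (c, \<alpha>)}"
proof safe
  fix c v \<phi> assume h: "(c, v, \<phi>) \<in> Cyl ce K" "(c, v, \<phi>) \<in> Gamma z ce A zA j p \<alpha>"
  then have e: "\<phi> = \<Phi> (c, \<alpha>)" using I2 al unfolding Cyl_def Gamma_def by auto
  show "norm (c - ce) < K" "0 < v" "Qf z zA A c v = 0" "\<phi> = \<Phi> (c, \<alpha>)"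
    using h e unfolding Cyl_def Gamma_def by auto
  show "\<bar>\<Phi> (c, \<alpha>)\<bar> < K" using h e unfolding Cyl_def by auto
next
  fix c v assume h: "norm (c - ce) < K" "0 < v" "Qf z zA A c v = 0" "\<bar>\<Phi> (c, \<alpha>)\<bar> < K"
  show "(c, v, \<Phi> (c, \<alpha>)) \<in> Cyl ce K" using h unfolding Cyl_def by auto
  show "(c, v, \<Phi> (c, \<alpha>)) \<in> Gamma z ce A zA j p \<alpha>" using h I1 al pos unfolding Gamma_def by auto
qed

lemma part1: "\<forall>y \<in> Cyl ce K \<inter> Gamma z ce A zA j p \<alpha>. snd (snd y) = \<Phi> (fst y, \<alpha>)"
  unfolding M_char by auto

lemma Phia_C1e: "C1e {c. norm (c - ce) < K} (\<lambda>c. \<Phi> (c, \<alpha>))"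
  by (rule C1e_compose[OF C1e_Pair[OF C1e_id C1e_const] PC]) (use al in auto)

lemma Phia_cont: "continuous_on {c. norm (c - ce) < K} (\<lambda>c. \<Phi> (c, \<alpha>))"
  by (rule C1e_fcont[OF Phia_C1e])

lemma open_ballK: "open {c::real^'n. norm (c - ce) < K}"
proof -
  have "{c::real^'n. norm (c - ce) < K} = ball ce K" by (auto simp: dist_norm norm_minus_commute)
  then show ?thesis by simp
qed

lemma open_V0: "open {c. norm (c - ce) < K \<and> \<bar>\<Phi> (c, \<alpha>)\<bar> < K}"
proof -
  have "open {c\<in>{c. norm (c - ce) < K}. (\<lambda>c. \<Phi> (c, \<alpha>)) c \<in> {x. \<bar>x\<bar> < K}}"
    by (rule open_sub_vimage[OF open_ballK Phia_cont]) (simp add: open_Collect_less continuous_intros)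
  then show ?thesis by simp
qed

lemma manifold_nz:
  assumes zA: "zA \<noteq> 0"
  shows "submanifold_dim TYPE(real^'n) (Cyl ce K \<inter> Gamma z ce A zA j p \<alpha>)"
proof -
  define a where "a = zA * A"
  have a0: "a \<noteq> 0" unfolding a_def using zA A0 by simp
  define W where "W = {c. norm (c - ce) < K \<and> \<bar>\<Phi> (c, \<alpha>)\<bar> < K \<and> a * (z \<bullet> c) < 0}"
  define \<psi> where "\<psi> = (\<lambda>c. (c, - a * inverse (z \<bullet> c), \<Phi> (c, \<alpha>)))"
  have oW: "open W"
  proof -
    have "open {c\<in>{c. norm (c - ce) < K \<and> \<bar>\<Phi> (c, \<alpha>)\<bar> < K}. (\<lambda>c. a * (z \<bullet> c)) c \<in> {x. x < 0}}"
      by (rule open_sub_vimage[OF open_V0]) (auto intro!: continuous_intros simp: open_Collect_less)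
    then show ?thesis unfolding W_def by (simp add: conj_assoc)
  qed
  have Wsub: "W \<subseteq> {c. norm (c - ce) < K}" unfolding W_def by auto
  have nzW: "z \<bullet> c \<noteq> 0" if "c \<in> W" for c using that unfolding W_def by auto
  have C: "C1e W \<psi>"
    unfolding \<psi>_def
    by (intro C1e_Pair C1e_id C1e_mult C1e_const C1e_inverse C1e_linear[OF bounded_linear_inner_right]
        C1e_subset[OF Phia_C1e Wsub] nzW)
  have gp: "\<forall>w\<in>W. fst (\<psi> w) = w" unfolding \<psi>_def by simp
  have M: "Cyl ce K \<inter> Gamma z ce A zA j p \<alpha> = \<psi> ` W"
  proof
    show "Cyl ce K \<inter> Gamma z ce A zA j p \<alpha> \<subseteq> \<psi> ` W"
    proof
      fix y assume "y \<in> Cyl ce K \<inter> Gamma z ce A zA j p \<alpha>"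
      then obtain c v where y: "y = (c, v, \<Phi> (c, \<alpha>))" "norm (c - ce) < K" "0 < v" "Qf z zA A c v = 0"
        "\<bar>\<Phi> (c, \<alpha>)\<bar> < K" unfolding M_char by auto
      have q: "z \<bullet> c = - a / v" using y(4) unfolding Qf_inner a_def by (simp add: field_simps)
      have "a * (z \<bullet> c) = - (a * a) / v" using q by simp
      moreover have "a * a > 0" using a0 by (cases "a > 0") (auto simp: mult_neg_neg)
      ultimately have neg: "a * (z \<bullet> c) < 0" using y(3) by (simp add: divide_pos_pos)
      have zc0: "z \<bullet> c \<noteq> 0" using neg by auto
      have "v = - a * inverse (z \<bullet> c)" using q a0 y(3) zc0 by (simp add: field_simps)
      then have "y = \<psi> c" unfolding \<psi>_def y(1) by simp
      moreover have "c \<in> W" unfolding W_def using y neg by simp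
      ultimately show "y \<in> \<psi> ` W" by blast
    qed
  next
    show "\<psi> ` W \<subseteq> Cyl ce K \<inter> Gamma z ce A zA j p \<alpha>"
    proof
      fix y assume "y \<in> \<psi> ` W"
      then obtain c where c: "c \<in> W" "y = \<psi> c" by blast
      define v where "v = - a * inverse (z \<bullet> c)"
      have neg: "a * (z \<bullet> c) < 0" using c unfolding W_def by simp
      have vp: "0 < v"
      proof -
        have nz: "z \<bullet> c \<noteq> 0" using nzW[OF c(1)] .
        have s2: "(z \<bullet> c) * (z \<bullet> c) > 0" using nz by (cases "z \<bullet> c > 0") (auto simp: mult_neg_neg)
        have "a / (z \<bullet> c) = (a * (z \<bullet> c)) / ((z \<bullet> c) * (z \<bullet> c))" using nz by (simp add: field_simps)
        also have "\<dots> < 0" by (rule divide_neg_pos[OF neg s2])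
        finally have "a / (z \<bullet> c) < 0" .
        moreover have "v = - (a / (z \<bullet> c))" unfolding v_def by (simp add: divide_inverse)
        ultimately show ?thesis by linarith
      qed
      have Q: "Qf z zA A c v = 0" unfolding Qf_inner v_def using nzW[OF c(1)] a0
        by (simp add: field_simps a_def)
      show "y \<in> Cyl ce K \<inter> Gamma z ce A zA j p \<alpha>"
        unfolding M_char using c vp Q unfolding W_def \<psi>_def v_def by auto
    qed
  qed
  show ?thesis by (rule submanifold_param[OF oW C bounded_linear_fst gp M])
qed

lemma manifold_z:
  assumes zA: "zA = 0"
  shows "submanifold_dim TYPE(real^'n) (Cyl ce K \<inter> Gamma z ce A zA j p \<alpha>)"
proof -
  obtain k0 where k0: "z $ k0 \<noteq> 0" using z0 by (metis vec_eq_iff zero_index)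
  define e where "e = (axis k0 (1::real) :: real^'n)"
  have ek: "e $ k0 = 1" unfolding e_def by (simp add: axis_def)
  have ze: "z \<bullet> e = z $ k0" unfolding e_def by (simp add: inner_axis)
  define Pm where "Pm = (\<lambda>w::real^'n. w - ((z \<bullet> w) / z $ k0) *\<^sub>R e)"
  have bd: "bounded_linear (\<lambda>x::real^'n. z \<bullet> x / z $ k0)"
    using bounded_linear_compose[OF bounded_linear_divide[of "z $ k0"] bounded_linear_inner_right[of z]] by simp
  have blPm: "bounded_linear Pm" unfolding Pm_def
    by (intro bounded_linear_sub bounded_linear_ident bounded_linear_scaleR_const bd)
  have zPm: "z \<bullet> Pm w = 0" for w unfolding Pm_def using k0 by (simp add: inner_diff_right ze)
  have Pmk: "Pm w $ k0 = w $ k0 - (z \<bullet> w) / z $ k0" for w unfolding Pm_def by (simp add: ek)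
  define V0 where "V0 = {c. norm (c - ce) < K \<and> \<bar>\<Phi> (c, \<alpha>)\<bar> < K}"
  define W where "W = {w. 0 < w $ k0} \<inter> Pm -` V0"
  define \<psi> where "\<psi> = (\<lambda>w. (Pm w, w $ k0, \<Phi> (Pm w, \<alpha>)))"
  define g where "g = (\<lambda>y::(real^'n) \<times> real \<times> real. fst y + (fst (snd y) - fst y $ k0) *\<^sub>R e)"
  have blg: "bounded_linear g" unfolding g_def
    by (intro bounded_linear_add bounded_linear_fst bounded_linear_scaleR_const bounded_linear_sub
        bounded_linear_compose[OF bounded_linear_fst bounded_linear_snd]
        bounded_linear_compose[OF bounded_linear_vec_nth bounded_linear_fst])
  have oW: "open W" unfolding W_def
  proof (intro open_Int)
    show "open {w::real^'n. 0 < w $ k0}" by (simp add: open_Collect_less continuous_intros)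
    show "open (Pm -` V0)" unfolding V0_def
      by (rule open_vimage[OF open_V0 linear_continuous_on[OF blPm]])
  qed
  have C: "C1e W \<psi>"
    unfolding \<psi>_def
  proof (intro C1e_Pair C1e_linear[OF blPm] C1e_linear[OF bounded_linear_vec_nth])
    show "C1e W (\<lambda>w. \<Phi> (Pm w, \<alpha>))"
      by (rule C1e_compose[OF C1e_linear[OF blPm] Phia_C1e]) (auto simp: W_def V0_def)
  qed
  have gp: "\<forall>w\<in>W. g (\<psi> w) = w"
    unfolding g_def \<psi>_def by (simp add: Pmk, simp add: Pm_def)
  have M: "Cyl ce K \<inter> Gamma z ce A zA j p \<alpha> = \<psi> ` W"
  proof
    show "Cyl ce K \<inter> Gamma z ce A zA j p \<alpha> \<subseteq> \<psi> ` W"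
    proof
      fix y assume "y \<in> Cyl ce K \<inter> Gamma z ce A zA j p \<alpha>"
      then obtain c v where y: "y = (c, v, \<Phi> (c, \<alpha>))" "norm (c - ce) < K" "0 < v" "Qf z zA A c v = 0"
        "\<bar>\<Phi> (c, \<alpha>)\<bar> < K" unfolding M_char by auto
      have zc: "z \<bullet> c = 0" using y(4) zA unfolding Qf_inner by simp
      define w where "w = c + (v - c $ k0) *\<^sub>R e"
      have zw: "z \<bullet> w = (v - c $ k0) * z $ k0" unfolding w_def by (simp add: inner_add_right zc ze)
      have Pw: "Pm w = c" unfolding Pm_def zw using k0 by (simp add: w_def)
      have wk: "w $ k0 = v" unfolding w_def by (simp add: ek)
      have "y = \<psi> w" unfolding \<psi>_def Pw wk y(1) by simp
      moreover have "w \<in> W" unfolding W_def V0_def using Pw wk y by simp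
      ultimately show "y \<in> \<psi> ` W" by blast
    qed
  next
    show "\<psi> ` W \<subseteq> Cyl ce K \<inter> Gamma z ce A zA j p \<alpha>"
    proof
      fix y assume "y \<in> \<psi> ` W"
      then obtain w where w: "w \<in> W" "y = \<psi> w" by blast
      have Q: "Qf z zA A (Pm w) (w $ k0) = 0" unfolding Qf_inner using zPm zA by simp
      show "y \<in> Cyl ce K \<inter> Gamma z ce A zA j p \<alpha>"
        unfolding M_char using w Q unfolding W_def V0_def \<psi>_def by auto
    qed
  qed
  show ?thesis by (rule submanifold_param[OF oW C blg gp M])
qed

lemma manifold_part: "submanifold_dim TYPE(real^'n) (Cyl ce K \<inter> Gamma z ce A zA j p \<alpha>)"
  using manifold_nz manifold_z by blast

definition "OmS = {y::(real^'n) \<times> real. norm (fst y - ce) < K \<and> 0 < snd y \<and> \<bar>\<Phi> (fst y, \<alpha>)\<bar> < K}"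

definition "fv = (\<lambda>y::(real^'n) \<times> real.
   (inverse (snd y) *\<^sub>R (jw (pi_w ce A (fst y) (snd y)) *\<^sub>R fst y
       - j (\<Phi> (fst y, \<alpha>)) (mu z ce (fst y) (\<Phi> (fst y, \<alpha>))) - \<alpha> *\<^sub>R p (\<Phi> (fst y, \<alpha>)) (fst y)),
    - jw (pi_w ce A (fst y) (snd y))))"

lemma Gc: "continuous_on OmS (\<lambda>y. \<Phi> (fst y, \<alpha>))"
  by (rule continuous_on_compose2[OF Phia_cont continuous_on_fst[OF continuous_on_id]]) (auto simp: OmS_def)

lemma open_OmS: "open OmS"
proof -
  let ?B = "{y::(real^'n) \<times> real. norm (fst y - ce) < K \<and> 0 < snd y}"
  have oB: "open ?B" by (intro open_Collect_conj open_Collect_less continuous_intros)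
  have cB: "continuous_on ?B (\<lambda>y. \<Phi> (fst y, \<alpha>))"
    by (rule continuous_on_compose2[OF Phia_cont continuous_on_fst[OF continuous_on_id]]) auto
  have "open {y\<in>?B. (\<lambda>y. \<Phi> (fst y, \<alpha>)) y \<in> {x. \<bar>x\<bar> < K}}"
    by (rule open_sub_vimage[OF oB cB]) (simp add: open_Collect_less continuous_intros)
  then show ?thesis unfolding OmS_def by (simp add: conj_assoc)
qed

lemma fv_C1e: "C1e OmS fv"
proof -
  have cf: "C1e OmS (\<lambda>y::(real^'n) \<times> real. fst y)" by (rule C1e_linear[OF bounded_linear_fst])
  have vf: "C1e OmS (\<lambda>y::(real^'n) \<times> real. snd y)" by (rule C1e_linear[OF bounded_linear_snd])
  have phf: "C1e OmS (\<lambda>y. \<Phi> (fst y, \<alpha>))"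
    by (rule C1e_compose[OF cf Phia_C1e]) (auto simp: OmS_def)
  have posf: "\<And>y. y \<in> OmS \<Longrightarrow> pos_vec (fst y)" using pos by (auto simp: OmS_def)
  have piw0: "C1e OmS (\<lambda>y. (\<Sum>k\<in>UNIV. ce $ k) - ((\<Sum>k\<in>UNIV. fst y $ k) + A * inverse (snd y)))"
    by (intro C1e_diff C1e_const C1e_add C1e_sum C1e_mult C1e_inverse vf
        C1e_linear[OF bounded_linear_compose[OF bounded_linear_vec_nth bounded_linear_fst]])
       (auto simp: OmS_def)
  have piw: "C1e OmS (\<lambda>y. pi_w ce A (fst y) (snd y))"
    by (rule C1e_cong[OF piw0]) (simp add: pi_w_def divide_inverse)
  have jwp: "C1e OmS (\<lambda>y. jw (pi_w ce A (fst y) (snd y)))"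
    by (rule C1e_compose[OF piw C1_on_C1e[OF jwC]]) auto
  have J: "C1e OmS (\<lambda>y. (\<lambda>(\<phi>, \<mu>). j \<phi> \<mu>) (\<Phi> (fst y, \<alpha>), mu z ce (fst y) (\<Phi> (fst y, \<alpha>))))"
    by (rule C1e_compose[OF C1e_Pair[OF phf C1e_mu[OF cf phf posf ce0]] C1_on_C1e[OF jC]]) auto
  have P: "C1e OmS (\<lambda>y. (\<lambda>(\<phi>, c). p \<phi> c) (\<Phi> (fst y, \<alpha>), fst y))"
    by (rule C1e_compose[OF C1e_Pair[OF phf cf] C1_on_C1e[OF pC]]) (use posf in auto)
  have all: "C1e OmS (\<lambda>y. (inverse (snd y) *\<^sub>R (jw (pi_w ce A (fst y) (snd y)) *\<^sub>R fst y
       - (\<lambda>(\<phi>, \<mu>). j \<phi> \<mu>) (\<Phi> (fst y, \<alpha>), mu z ce (fst y) (\<Phi> (fst y, \<alpha>)))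
       - \<alpha> *\<^sub>R (\<lambda>(\<phi>, c). p \<phi> c) (\<Phi> (fst y, \<alpha>), fst y)),
    - jw (pi_w ce A (fst y) (snd y))))"
    by (intro C1e_Pair C1e_scaleR C1e_inverse vf C1e_diff C1e_scaleR jwp cf J C1e_const P C1e_minus)
       (auto simp: OmS_def)
  show ?thesis by (rule C1e_cong[OF all]) (simp add: fv_def)
qed

lemma vc_identity:
  fixes c J P :: "real^'n"
  assumes "v \<noteq> 0"
  shows "v *\<^sub>R (inverse v *\<^sub>R (a *\<^sub>R c - J - P)) + (- a) *\<^sub>R c = - J - P"
  using assms by (simp add: algebra_simps)

lemma ode_part:
  assumes y0: "y0 \<in> Cyl ce K \<inter> Gamma z ce A zA j p \<alpha>"
  shows "\<exists>T c v \<phi>. pl_solution z ce A zA j p jw \<alpha> y0 T c v \<phi> \<and>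
                   (\<forall>t\<in>{0..<T}. \<phi> t = \<Phi> (c t, \<alpha>)) \<and>
                   (\<forall>T' c' v' \<phi>'. pl_solution z ce A zA j p jw \<alpha> y0 T' c' v' \<phi>' \<longrightarrow>
                      (\<forall>t\<in>{0..<min T T'}. c' t = c t \<and> v' t = v t \<and> \<phi>' t = \<phi> t))"
proof -
  obtain c0 v0 where y0e: "y0 = (c0, v0, \<Phi> (c0, \<alpha>))" and c0: "norm (c0 - ce) < K" and v0: "0 < v0"
    and Q0: "Qf z zA A c0 v0 = 0" and P0: "\<bar>\<Phi> (c0, \<alpha>)\<bar> < K"
    using y0 unfolding M_char by auto
  have y0O: "(c0, v0) \<in> OmS" unfolding OmS_def using c0 v0 P0 by simp
  obtain D where fD: "C1d OmS fv D" using fv_C1e unfolding C1e_def by blast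
  obtain h u where hp: "h > 0" and u0: "u 0 = (c0, v0)" and uc: "continuous_on {0..h} u"
    and ud: "\<forall>t\<in>{0..h}. u t \<in> OmS \<and> (u has_vector_derivative fv (u t)) (at t within {0..h})"
    using ode_exists[OF open_OmS fD y0O] by blast
  define c1 where "c1 = (\<lambda>t. fst (u t))"
  define v1 where "v1 = (\<lambda>t. snd (u t))"
  define \<phi>1 where "\<phi>1 = (\<lambda>t. \<Phi> (c1 t, \<alpha>))"
  have uO: "norm (c1 t - ce) < K" "0 < v1 t" "\<bar>\<phi>1 t\<bar> < K" if "t \<in> {0..h}" for t
    using ud that unfolding OmS_def c1_def v1_def \<phi>1_def by auto
  have fvc: "continuous_on OmS fv" by (rule C1e_fcont[OF fv_C1e])
  have fuc: "continuous_on {0..h} (\<lambda>t. fv (u t))"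
    using continuous_on_compose2[OF fvc uc] ud by blast
  have dc: "(c1 has_vector_derivative fst (fv (u t))) (at t within {0..h})" if "t \<in> {0..h}" for t
    unfolding c1_def using hvd_linear[OF bounded_linear_fst] ud that by blast
  have dv: "(v1 has_vector_derivative snd (fv (u t))) (at t within {0..h})" if "t \<in> {0..h}" for t
    unfolding v1_def using hvd_linear[OF bounded_linear_snd] ud that by blast
  let ?J = "\<lambda>t. j (\<phi>1 t) (mu z ce (c1 t) (\<phi>1 t))"
  let ?P = "\<lambda>t. \<alpha> *\<^sub>R p (\<phi>1 t) (c1 t)"
  let ?W = "\<lambda>t. jw (pi_w ce A (c1 t) (v1 t))"
  have fvu: "fv (u t) = (inverse (v1 t) *\<^sub>R (?W t *\<^sub>R c1 t - ?J t - ?P t), - ?W t)" for t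
    unfolding fv_def c1_def v1_def \<phi>1_def by simp
  have dvc: "((\<lambda>t. v1 t *\<^sub>R c1 t) has_vector_derivative (- ?J t - ?P t)) (at t within {0..h})"
    if t: "t \<in> {0..h}" for t
  proof -
    have "((\<lambda>t. v1 t *\<^sub>R c1 t) has_vector_derivative
           (v1 t *\<^sub>R fst (fv (u t)) + snd (fv (u t)) *\<^sub>R c1 t)) (at t within {0..h})"
      by (rule hvd_scaleR[OF dv[OF t] dc[OF t]])
    moreover have "v1 t *\<^sub>R fst (fv (u t)) + snd (fv (u t)) *\<^sub>R c1 t = - ?J t - ?P t"
      unfolding fvu using vc_identity[of "v1 t" "?W t" "c1 t" "?J t" "?P t"] uO(2)[OF t]
      by (simp add: divide_inverse_commute)
    ultimately show ?thesis by simp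
  qed
  have Izero: "z \<bullet> (- ?J t - ?P t) = 0" if t: "t \<in> {0..h}" for t
  proof -
    have "I_alpha z ce j p \<alpha> (c1 t) (\<phi>1 t) = 0" using I1 uO(1)[OF t] al unfolding \<phi>1_def by blast
    then show ?thesis unfolding I_alpha_def by (simp add: inner_diff_right inner_add_right)
  qed
  \<comment> \<open>conservation of charge\<close>
  define H where "H = (\<lambda>t. z \<bullet> (v1 t *\<^sub>R c1 t))"
  have dH: "(H has_derivative (\<lambda>x. 0)) (at t within {0..h})" if t: "t \<in> {0..h}" for t
  proof -
    have "(H has_vector_derivative z \<bullet> (- ?J t - ?P t)) (at t within {0..h})"
      unfolding H_def by (rule hvd_linear[OF bounded_linear_inner_right[of z] dvc[OF t]])
    then show ?thesis using Izero[OF t] unfolding has_vector_derivative_def by simp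
  qed
  obtain C where HC: "\<forall>t\<in>{0..h}. H t = C"
    using has_derivative_zero_constant[OF convex_real_interval(5) dH] by blast
  have H0: "H 0 = - zA * A"
  proof -
    have "z \<bullet> c0 = - zA * A / v0" using Q0 unfolding Qf_inner by (simp add: field_simps)
    then show ?thesis unfolding H_def c1_def v1_def u0 using v0 by simp
  qed
  have Qt: "Qf z zA A (c1 t) (v1 t) = 0" if t: "t \<in> {0..h}" for t
  proof -
    have "H t = - zA * A" using HC t H0 hp by force
    then have "v1 t * (z \<bullet> c1 t) = - zA * A" unfolding H_def by simp
    then show ?thesis unfolding Qf_inner using uO(2)[OF t] by (simp add: field_simps)
  qed
  have sub: "{0..<h} \<subseteq> {0..h}" by auto
  have sol: "pl_solution z ce A zA j p jw \<alpha> y0 h c1 v1 \<phi>1"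
    unfolding pl_solution_def
  proof (intro conjI)
    show "0 < h" by fact
    show "\<exists>c'. continuous_on {0..<h} c' \<and> (\<forall>t\<in>{0..<h}. (c1 has_vector_derivative c' t) (at t within {0..<h}))"
    proof (intro exI[of _ "\<lambda>t. fst (fv (u t))"] conjI ballI)
      show "continuous_on {0..<h} (\<lambda>t. fst (fv (u t)))"
        using continuous_on_subset[OF fuc sub] by (intro continuous_intros)
      fix t :: real assume "t \<in> {0..<h}"
      then show "(c1 has_vector_derivative fst (fv (u t))) (at t within {0..<h})"
        by (intro has_vector_derivative_within_subset[OF dc sub]) auto
    qed
    show "\<exists>v'. continuous_on {0..<h} v' \<and> (\<forall>t\<in>{0..<h}. (v1 has_vector_derivative v' t) (at t within {0..<h}))"
    proof (intro exI[of _ "\<lambda>t. snd (fv (u t))"] conjI ballI)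
      show "continuous_on {0..<h} (\<lambda>t. snd (fv (u t)))"
        using continuous_on_subset[OF fuc sub] by (intro continuous_intros)
      fix t :: real assume "t \<in> {0..<h}"
      then show "(v1 has_vector_derivative snd (fv (u t))) (at t within {0..<h})"
        by (intro has_vector_derivative_within_subset[OF dv sub]) auto
    qed
    show "continuous_on {0..<h} \<phi>1"
    proof -
      have "continuous_on {0..h} c1" unfolding c1_def by (intro continuous_intros uc)
      then have "continuous_on {0..h} \<phi>1"
        unfolding \<phi>1_def using continuous_on_compose2[OF Phia_cont] uO(1) by blast
      then show ?thesis using sub by (rule continuous_on_subset)
    qed
    show "\<forall>t\<in>{0..<h}. pos_vec (c1 t) \<and> 0 < v1 t \<and>
        ((\<lambda>s. v1 s *\<^sub>R c1 s) has_vector_derivative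
            (- j (\<phi>1 t) (mu z ce (c1 t) (\<phi>1 t)) - \<alpha> *\<^sub>R p (\<phi>1 t) (c1 t))) (at t within {0..<h}) \<and>
        Qf z zA A (c1 t) (v1 t) = 0 \<and>
        (v1 has_vector_derivative (- jw (pi_w ce A (c1 t) (v1 t)))) (at t within {0..<h})"
    proof
      fix t assume t: "t \<in> {0..<h}"
      then have t': "t \<in> {0..h}" by auto
      show "pos_vec (c1 t) \<and> 0 < v1 t \<and>
        ((\<lambda>s. v1 s *\<^sub>R c1 s) has_vector_derivative
            (- j (\<phi>1 t) (mu z ce (c1 t) (\<phi>1 t)) - \<alpha> *\<^sub>R p (\<phi>1 t) (c1 t))) (at t within {0..<h}) \<and>
        Qf z zA A (c1 t) (v1 t) = 0 \<and>
        (v1 has_vector_derivative (- jw (pi_w ce A (c1 t) (v1 t)))) (at t within {0..<h})"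
        using pos uO[OF t'] Qt[OF t'] has_vector_derivative_within_subset[OF dvc[OF t'] sub]
          has_vector_derivative_within_subset[OF dv[OF t'] sub] fvu[of t] by auto
    qed
    show "(c1 0, v1 0, \<phi>1 0) = y0" unfolding y0e c1_def v1_def \<phi>1_def u0 by simp
  qed
  have uniq: "\<forall>t\<in>{0..<min h T'}. c2 t = c1 t \<and> v2 t = v1 t \<and> \<phi>2 t = \<phi>1 t"
    if sol2: "pl_solution z ce A zA j p jw \<alpha> y0 T' c2 v2 \<phi>2" for T' c2 v2 \<phi>2
  proof -
    obtain c2d where c2d: "\<forall>t\<in>{0..<T'}. (c2 has_vector_derivative c2d t) (at t within {0..<T'})"
      using sol2 unfolding pl_solution_def by blast
    have T'p: "0 < T'" using sol2 unfolding pl_solution_def by blast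
    have p2c: "continuous_on {0..<T'} \<phi>2" using sol2 unfolding pl_solution_def by blast
    have S2: "\<forall>t\<in>{0..<T'}. pos_vec (c2 t) \<and> 0 < v2 t \<and>
        ((\<lambda>s. v2 s *\<^sub>R c2 s) has_vector_derivative
            (- j (\<phi>2 t) (mu z ce (c2 t) (\<phi>2 t)) - \<alpha> *\<^sub>R p (\<phi>2 t) (c2 t))) (at t within {0..<T'}) \<and>
        Qf z zA A (c2 t) (v2 t) = 0 \<and>
        (v2 has_vector_derivative (- jw (pi_w ce A (c2 t) (v2 t)))) (at t within {0..<T'})"
      using sol2 unfolding pl_solution_def by blast
    have init2: "(c2 0, v2 0, \<phi>2 0) = y0" using sol2 unfolding pl_solution_def by blast
    define y2 where "y2 = (\<lambda>t. (c2 t, v2 t))"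
    have y2c: "continuous_on {0..<T'} y2"
    proof -
      have "continuous_on {0..<T'} c2" unfolding continuous_on_eq_continuous_within
        using c2d has_vector_derivative_continuous by blast
      moreover have "continuous_on {0..<T'} v2" unfolding continuous_on_eq_continuous_within
        using S2 has_vector_derivative_continuous by blast
      ultimately show ?thesis unfolding y2_def by (intro continuous_intros)
    qed
    have y2p: "\<forall>t\<in>{0..<T'}. y2 t \<in> OmS \<and> \<bar>\<phi>2 t\<bar> < K \<longrightarrow>
               \<phi>2 t = \<Phi> (fst (y2 t), \<alpha>) \<and> (y2 has_vector_derivative fv (y2 t)) (at t within {0..<T'})"
    proof (intro ballI impI)
      fix t assume t: "t \<in> {0..<T'}" and h2: "y2 t \<in> OmS \<and> \<bar>\<phi>2 t\<bar> < K"
      have cK: "norm (c2 t - ce) < K" using h2 unfolding y2_def OmS_def by simp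
      have vt: "0 < v2 t" using S2 t by blast
      let ?J2 = "j (\<phi>2 t) (mu z ce (c2 t) (\<phi>2 t))"
      let ?P2 = "\<alpha> *\<^sub>R p (\<phi>2 t) (c2 t)"
      let ?W2 = "jw (pi_w ce A (c2 t) (v2 t))"
      define H2 where "H2 = (\<lambda>s. z \<bullet> (v2 s *\<^sub>R c2 s))"
      have H2c: "H2 s = - zA * A" if "s \<in> {0..<T'}" for s
      proof -
        have "Qf z zA A (c2 s) (v2 s) = 0" "0 < v2 s" using S2 that by auto
        then show ?thesis unfolding H2_def Qf_inner by (simp add: field_simps)
      qed
      have d1: "(H2 has_vector_derivative z \<bullet> (- ?J2 - ?P2)) (at t within {0..<T'})"
        unfolding H2_def using hvd_linear[OF bounded_linear_inner_right] S2 t by blast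
      have d2: "(H2 has_vector_derivative 0) (at t within {0..<T'})"
        by (rule has_vector_derivative_transform[OF t H2c has_vector_derivative_const])
      have "z \<bullet> (- ?J2 - ?P2) = 0" using hvd_unique_Ico[OF _ _ d1 d2] t by auto
      then have "I_alpha z ce j p \<alpha> (c2 t) (\<phi>2 t) = 0"
        unfolding I_alpha_def by (simp add: inner_diff_right inner_add_right)
      then have e2: "\<phi>2 t = \<Phi> (c2 t, \<alpha>)" using I2 cK al h2 by blast
      have prod: "((\<lambda>s. v2 s *\<^sub>R c2 s) has_vector_derivative (v2 t *\<^sub>R c2d t + (- ?W2) *\<^sub>R c2 t)) (at t within {0..<T'})"
        using hvd_scaleR S2 c2d t by blast
      have "v2 t *\<^sub>R c2d t + (- ?W2) *\<^sub>R c2 t = - ?J2 - ?P2"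
        using hvd_unique_Ico[OF _ _ prod] S2 t by auto
      then have "c2d t = inverse (v2 t) *\<^sub>R (?W2 *\<^sub>R c2 t - ?J2 - ?P2)"
        by (rule solve_x[rotated]) (use vt in simp)
      then have "(c2d t, - ?W2) = fv (y2 t)" unfolding fv_def y2_def using e2 by simp
      moreover have "(y2 has_vector_derivative (c2d t, - ?W2)) (at t within {0..<T'})"
        unfolding y2_def using has_vector_derivative_Pair c2d S2 t by blast
      ultimately show "\<phi>2 t = \<Phi> (fst (y2 t), \<alpha>) \<and> (y2 has_vector_derivative fv (y2 t)) (at t within {0..<T'})"
        using e2 unfolding y2_def by simp
    qed
    have i1: "y2 0 = u 0" using init2 u0 y0e unfolding y2_def by simp
    have i2: "\<phi>2 0 = \<Phi> (fst (u 0), \<alpha>)" using init2 u0 y0e by simp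
    have GK: "\<forall>y\<in>OmS. \<bar>\<Phi> (fst y, \<alpha>)\<bar> < K" unfolding OmS_def by simp
    have "\<forall>t\<in>{0..<min h T'}. y2 t = u t \<and> \<phi>2 t = \<Phi> (fst (u t), \<alpha>)"
      by (rule uniq_abstract[OF open_OmS fv_C1e Gc GK hp ud y2c p2c y2p i1 i2])
    then show ?thesis unfolding y2_def c1_def v1_def \<phi>1_def by (metis fst_conv snd_conv)
  qed
  show ?thesis using sol uniq unfolding \<phi>1_def by blast
qed

end

theorem proposition11:
  fixes z ce :: "real^'n" and A zA :: real
    and j p :: "real \<Rightarrow> real^'n \<Rightarrow> real^'n" and jw :: "real \<Rightarrow> real"
  assumes "CARD('n) \<ge> 2"
    and "z \<noteq> 0"
    and "\<forall>k. 0 < ce $ k"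
    and "(\<Sum>k\<in>UNIV. z $ k * ce $ k) = 0"
    and "0 < A"
    and "C1_on UNIV (\<lambda>(\<phi>, \<mu>). j \<phi> \<mu>)"
    and "C1_on {(\<phi>, c). pos_vec c} (\<lambda>(\<phi>, c). p \<phi> c)"
    and "C1_on UNIV jw"
    and "\<forall>\<phi>. j \<phi> 0 = 0"
    and "\<forall>\<phi>. transpose (matrix (frechet_derivative (j \<phi>) (at 0))) = matrix (frechet_derivative (j \<phi>) (at 0))
             \<and> (\<forall>x. x \<noteq> 0 \<longrightarrow> 0 < x \<bullet> (matrix (frechet_derivative (j \<phi>) (at 0)) *v x))"
  shows "\<exists>K\<^sub>\<alpha>>0. \<exists>K>0. \<exists>\<Phi> :: (real^'n) \<times> real \<Rightarrow> real.
           C1_on {(c, \<alpha>). norm (c - ce) < K \<and> \<bar>\<alpha>\<bar> < K\<^sub>\<alpha>} \<Phi> \<and>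
           (\<forall>\<alpha>. \<bar>\<alpha>\<bar> < K\<^sub>\<alpha> \<longrightarrow>
              submanifold_dim TYPE(real^'n) (Cyl ce K \<inter> Gamma z ce A zA j p \<alpha>) \<and>
              (\<forall>y \<in> Cyl ce K \<inter> Gamma z ce A zA j p \<alpha>. snd (snd y) = \<Phi> (fst y, \<alpha>)) \<and>
              (\<forall>y0 \<in> Cyl ce K \<inter> Gamma z ce A zA j p \<alpha>.
                 \<exists>T c v \<phi>. pl_solution z ce A zA j p jw \<alpha> y0 T c v \<phi> \<and>
                   (\<forall>t\<in>{0..<T}. \<phi> t = \<Phi> (c t, \<alpha>)) \<and>
                   (\<forall>T' c' v' \<phi>'. pl_solution z ce A zA j p jw \<alpha> y0 T' c' v' \<phi>' \<longrightarrow>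
                      (\<forall>t\<in>{0..<min T T'}. c' t = c t \<and> v' t = v t \<and> \<phi>' t = \<phi> t))))"
proof -
  obtain K K\<alpha> \<Phi> where Kp: "0 < K" and K\<alpha>: "0 < K\<alpha>"
    and PC: "C1e {(c, \<alpha>). norm (c - ce) < K \<and> \<bar>\<alpha>\<bar> < K\<alpha>} \<Phi>"
    and I1: "\<forall>c \<alpha>. norm (c - ce) < K \<and> \<bar>\<alpha>\<bar> < K\<alpha> \<longrightarrow> I_alpha z ce j p \<alpha> c (\<Phi> (c, \<alpha>)) = 0"
    and I2: "\<forall>c \<alpha> \<phi>. norm (c - ce) < K \<and> \<bar>\<alpha>\<bar> < K\<alpha> \<and> \<bar>\<phi>\<bar> < K \<and> I_alpha z ce j p \<alpha> c \<phi> = 0 \<longrightarrow> \<phi> = \<Phi> (c, \<alpha>)"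
    and pos: "\<forall>c. norm (c - ce) < K \<longrightarrow> pos_vec c"
    using implicit_Phi[OF assms(2-10)] by blast
  note H = assms(2,3,5-8) Kp PC I1 I2 pos
  have "C1_on {(c, \<alpha>). norm (c - ce) < K \<and> \<bar>\<alpha>\<bar> < K\<alpha>} \<Phi>" by (rule C1e_C1_on[OF PC])
  moreover have "\<forall>\<alpha>. \<bar>\<alpha>\<bar> < K\<alpha> \<longrightarrow>
              submanifold_dim TYPE(real^'n) (Cyl ce K \<inter> Gamma z ce A zA j p \<alpha>) \<and>
              (\<forall>y \<in> Cyl ce K \<inter> Gamma z ce A zA j p \<alpha>. snd (snd y) = \<Phi> (fst y, \<alpha>)) \<and>
              (\<forall>y0 \<in> Cyl ce K \<inter> Gamma z ce A zA j p \<alpha>.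
                 \<exists>T c v \<phi>. pl_solution z ce A zA j p jw \<alpha> y0 T c v \<phi> \<and>
                   (\<forall>t\<in>{0..<T}. \<phi> t = \<Phi> (c t, \<alpha>)) \<and>
                   (\<forall>T' c' v' \<phi>'. pl_solution z ce A zA j p jw \<alpha> y0 T' c' v' \<phi>' \<longrightarrow>
                      (\<forall>t\<in>{0..<min T T'}. c' t = c t \<and> v' t = v t \<and> \<phi>' t = \<phi> t)))"
  proof (intro allI impI conjI ballI)
    fix \<alpha> :: real assume al: "\<bar>\<alpha>\<bar> < K\<alpha>"
    show "submanifold_dim TYPE(real^'n) (Cyl ce K \<inter> Gamma z ce A zA j p \<alpha>)"
      by (rule manifold_part[OF H al])
    show "\<And>y. y \<in> Cyl ce K \<inter> Gamma z ce A zA j p \<alpha> \<Longrightarrow> snd (snd y) = \<Phi> (fst y, \<alpha>)"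
      using part1[OF H al] by blast
    show "\<And>y0. y0 \<in> Cyl ce K \<inter> Gamma z ce A zA j p \<alpha> \<Longrightarrow>
                 \<exists>T c v \<phi>. pl_solution z ce A zA j p jw \<alpha> y0 T c v \<phi> \<and>
                   (\<forall>t\<in>{0..<T}. \<phi> t = \<Phi> (c t, \<alpha>)) \<and>
                   (\<forall>T' c' v' \<phi>'. pl_solution z ce A zA j p jw \<alpha> y0 T' c' v' \<phi>' \<longrightarrow>
                      (\<forall>t\<in>{0..<min T T'}. c' t = c t \<and> v' t = v t \<and> \<phi>' t = \<phi> t))"
      by (rule ode_part[OF H al])
  qed
  ultimately show ?thesis using Kp K\<alpha> by blast
qed

end
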